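(* Let $n\ge1$, $Q:[0,\infty)\to\mathbb{C}^{n\times n}$ with $Q=Q^*$ and $\int_0^\infty(1+t)|Q(t)|\,dt<\infty$, $U$ an $n\times n$ unitary matrix, and $\mathcal{L}=-\frac{d^2}{dx^2}+Q$ the selfadjoint operator on $L^2([0,\infty);\mathbb{C}^n)$ with boundary condition $\frac{i}{2}(U^*-\mathbb{I})f(0)+\frac12(U^*+\mathbb{I})f'(0)=0$, assumed to have no virtual level at zero. For real $k\ne0$ let $\Psi(x,k)=F(x,-k)+F(x,k)S(k)$ be the scattered wave, where $F$ is the Jost solution and $S$ the scattering matrix. Then $$U=\big(\Psi(0,k)-i\Psi_x(0,k)\big)\big(\Psi(0,k)+i\Psi_x(0,k)\big)^{-1}.$$ In particular, the boundary condition $U$ is recovered from the scattering matrix and the kernel $K$ of the transformation operator (which determines $F$).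
   Context: Jost solution: $F(x,k)$ ($\operatorname{Im}k\ge0$) is the matrix solution of $-F''+QF=k^2F$ with $F(x,k)-e^{ikx}\mathbb{I}\to0$ as $x\to\infty$, and $F(x,k)=e^{ikx}\mathbb{I}+\int_x^\infty K(x,t)e^{ikt}dt$ (transformation operator). With $A=\frac12(U+\mathbb{I})$, $B=\frac{i}{2}(U-\mathbb{I})$, the scattering matrix for real $k\ne0$ is $S(k)=-[F(0,k)^*B-F_x(0,k)^*A][F(0,-k)^*B-F_x(0,-k)^*A]^{-1}$. "No virtual level at zero" is the paper's standing assumption that zero is not a virtual level (in particular not an eigenvalue) of $\mathcal{L}$. *)

theory Defs
  imports "HOL-Analysis.Analysis"
begin

definition adj :: "complex^'n^'m \<Rightarrow> complex^'m^'n" where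
  "adj A = (\<chi> i j. cnj (A $ j $ i))"

text \<open>Zero is a virtual level of the operator -d^2/dx^2 + Q on the half line with
  boundary condition (i/2)(U^* - I) f(0) + (1/2)(U^* + I) f'(0) = 0 iff there is a
  nonzero bounded solution of -f'' + Q f = 0 on [0,\<infinity>) (in the Caratheodory sense:
  f is C^1 and f' is an indefinite integral of Q f) satisfying the boundary condition.\<close>
definition zero_virtual_level ::
  "(real \<Rightarrow> complex^'n^'n) \<Rightarrow> complex^'n^'n \<Rightarrow> bool" where
  "zero_virtual_level Q U \<longleftrightarrow>
     (\<exists>(f :: real \<Rightarrow> complex^'n) f'.
        (\<exists>x\<ge>0. f x \<noteq> 0) \<and>
        bounded (f ` {0..}) \<and>
        (\<forall>x\<ge>0. (f has_vector_derivative f' x) (at x within {0..})) \<and>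
        (\<forall>x\<ge>0. ((\<lambda>t. Q t *v f t) has_integral (f' x - f' 0)) {0..x}) \<and>
        (mat (\<i>/2) ** (adj U - mat 1)) *v f 0 + (mat (1/2) ** (adj U + mat 1)) *v f' 0 = 0)"

end

theory Submission
  imports Defs
begin

lemma adj_adj[simp]: "adj (adj A) = A"
  by (simp add: adj_def vec_eq_iff)
lemma adj_mult: "adj (A ** B) = adj B ** adj (A::complex^'n^'m)"
  by (simp add: adj_def matrix_matrix_mult_def vec_eq_iff mult.commute)
lemma adj_add[simp]: "adj (A + B) = adj A + adj B"
  by (simp add: adj_def vec_eq_iff)
lemma adj_diff[simp]: "adj (A - B) = adj A - adj B"
  by (simp add: adj_def vec_eq_iff)
lemma adj_uminus[simp]: "adj (- A) = - adj A"
  by (simp add: adj_def vec_eq_iff)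
lemma adj_mat[simp]: "adj (mat c :: complex^'n^'n) = mat (cnj c)"
  by (simp add: adj_def mat_def vec_eq_iff)
lemma adj_zero[simp]: "adj 0 = 0"
  by (simp add: adj_def vec_eq_iff)

lemma mm_rdistrib: "(A + B) ** C = A ** C + B ** (C::'a::semiring_1^'n^'m)"
  by (simp add: matrix_matrix_mult_def vec_eq_iff distrib_right sum.distrib)
lemma mm_ldistrib: "C ** (A + B) = C ** A + C ** (B::'a::semiring_1^'n^'m)"
  by (simp add: matrix_add_ldistrib)
lemma mm_rdiff: "(A - B) ** C = A ** C - B ** (C::'a::ring_1^'n^'m)"
  by (simp add: matrix_matrix_mult_def vec_eq_iff left_diff_distrib sum_subtractf)
lemma mm_ldiff: "C ** (A - B) = C ** A - C ** (B::'a::ring_1^'n^'m)"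
  by (simp add: matrix_matrix_mult_def vec_eq_iff right_diff_distrib sum_subtractf)
lemma mm_runinus: "(- A) ** C = - (A ** (C::'a::ring_1^'n^'m))"
  by (simp add: matrix_matrix_mult_def vec_eq_iff sum_negf)
lemma mm_luminus: "C ** (- A) = - (C ** (A::'a::ring_1^'n^'m))"
  by (simp add: matrix_matrix_mult_def vec_eq_iff sum_negf)
lemma mm_lzero[simp]: "0 ** A = (0::'a::semiring_1^'n^'m)"
  by (simp add: matrix_matrix_mult_def vec_eq_iff)
lemma mm_rzero[simp]: "A ** 0 = (0::'a::semiring_1^'n^'m)"
  by (simp add: matrix_matrix_mult_def vec_eq_iff)
lemma dl: "(if P then a else 0) * (x::'a::semiring_0) = (if P then a * x else 0)" by simp
lemma dr: "(x::'a::semiring_0) * (if P then a else 0) = (if P then x * a else 0)" by simp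
lemma mat_mm_mat[simp]: "mat a ** mat b = (mat (a*b) :: 'a::comm_semiring_1^'n^'n)"
  by (simp add: matrix_matrix_mult_def vec_eq_iff mat_def dl sum.delta)
lemma mat_left: "(mat c ** A :: 'a::comm_semiring_1^'n^'m) = (\<chi> i j. c * A$i$j)"
  by (simp add: matrix_matrix_mult_def vec_eq_iff mat_def dl sum.delta)
lemma mat_right: "(A ** mat c :: 'a::comm_semiring_1^'n^'m) = (\<chi> i j. c * A$i$j)"
  by (simp add: matrix_matrix_mult_def vec_eq_iff mat_def dr sum.delta' mult.commute)
lemma mat_comm: "mat c ** A = A ** (mat c :: 'a::comm_semiring_1^'n^'n)"
  by (simp add: mat_left mat_right)
lemma mat_assoc: "mat c ** (A ** B) = A ** (mat c ** (B :: 'a::comm_semiring_1^'n^'n))"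
  by (metis mat_comm[of c A] matrix_mul_assoc)
lemma mat_add: "mat a + mat b = (mat (a+b) :: 'a::semiring_1^'n^'n)"
  by (simp add: mat_def vec_eq_iff)
lemma mat_diff: "mat a - mat b = (mat (a-b) :: 'a::ring_1^'n^'n)"
  by (simp add: mat_def vec_eq_iff)
lemma mat_uminus: "- mat a = (mat (-a) :: 'a::ring_1^'n^'n)"
  by (simp add: mat_def vec_eq_iff)
lemma mat_vec: "mat c *v x = c *s (x::'a::comm_semiring_1^'n)"
  by (simp add: matrix_vector_mult_def vec_eq_iff mat_def dl sum.delta)
lemma mat_eq_iff: "(mat a :: 'a::zero_neq_one^'n^'n) = mat b \<longleftrightarrow> a = b"
  by (auto simp: mat_def vec_eq_iff)


definition sm :: "complex \<Rightarrow> complex^'n^'m \<Rightarrow> complex^'n^'m" where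
  "sm c X = (\<chi> i j. c * X$i$j)"

lemma sm_nth[simp]: "sm c X $ i $ j = c * X$i$j" by (simp add: sm_def)
lemma sm_mat_left: "mat c ** X = sm c X" by (simp add: mat_left sm_def)
lemma sm_mat_right: "X ** mat c = sm c X" by (simp add: mat_right sm_def)
lemma sm_mm_l: "sm c X ** Y = sm c (X ** Y)"
  by (simp add: sm_def matrix_matrix_mult_def vec_eq_iff sum_distrib_left mult.assoc)
lemma sm_mm_r: "X ** sm c Y = sm c (X ** Y)"
  by (simp add: sm_def matrix_matrix_mult_def vec_eq_iff sum_distrib_left mult.left_commute)
lemma sm_sm: "sm a (sm b X) = sm (a*b) X" by (simp add: sm_def vec_eq_iff)
lemma sm_add: "sm c (X + Y) = sm c X + sm c Y" by (simp add: sm_def vec_eq_iff algebra_simps)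
lemma sm_diff: "sm c (X - Y) = sm c X - sm c Y" by (simp add: sm_def vec_eq_iff algebra_simps)
lemma sm_uminus: "sm c (- X) = sm (-c) X" by (simp add: sm_def vec_eq_iff algebra_simps)
lemma uminus_sm: "- sm c X = sm (-c) X" by (simp add: sm_def vec_eq_iff algebra_simps)
lemma adj_sm: "adj (sm c X) = sm (cnj c) (adj X)" by (simp add: sm_def adj_def vec_eq_iff)
lemma sm_one[simp]: "sm 1 X = X" by (simp add: sm_def vec_eq_iff)
lemma sm_zero[simp]: "sm 0 X = 0" by (simp add: sm_def vec_eq_iff)
lemma sm_vec: "sm c X *v x = c *s (X *v x)"
  by (simp add: sm_def matrix_vector_mult_def vec_eq_iff sum_distrib_left mult.assoc)

lemmas smsimps = sm_mat_left sm_mat_right sm_mm_l sm_mm_r sm_sm sm_add sm_diff sm_uminus uminus_sm adj_sm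
  mm_rdistrib mm_ldistrib mm_rdiff mm_ldiff mm_runinus mm_luminus adj_mult

lemma matrix_inv_props:
  fixes A :: "'a::field^'n^'n"
  assumes "invertible A"
  shows "A ** matrix_inv A = mat 1" "matrix_inv A ** A = mat 1"
proof -
  have "\<exists>A'. A ** A' = mat 1 \<and> A' ** A = mat 1" using assms by (simp add: invertible_def)
  from someI_ex[OF this] show "A ** matrix_inv A = mat 1" "matrix_inv A ** A = mat 1"
    by (simp_all add: matrix_inv_def)
qed

lemma invertible_ker:
  fixes A :: "'a::field^'n^'n"
  assumes "\<And>x. A *v x = 0 \<Longrightarrow> x = 0"
  shows "invertible A"
  using assms invertible_left_inverse matrix_left_invertible_ker by blast

lemma adj_ker:
  fixes X :: "complex^'n^'m"
  assumes "(adj X ** X) *v w = 0"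
  shows "X *v w = 0"
proof -
  define y where "y = X *v w"
  have a: "adj X *v y = 0" using assms by (simp add: y_def matrix_vector_mul_assoc)
  have "(\<Sum>i\<in>UNIV. cnj (w$i) * (adj X *v y)$i) = (\<Sum>i\<in>UNIV. \<Sum>k\<in>UNIV. cnj (w$i) * cnj (X$k$i) * y$k)"
    by (simp add: matrix_vector_mult_def adj_def sum_distrib_left mult.assoc)
  also have "\<dots> = (\<Sum>k\<in>UNIV. \<Sum>i\<in>UNIV. cnj (X$k$i * w$i) * y$k)"
    by (subst sum.swap) (simp add: mult.commute)
  also have "\<dots> = (\<Sum>k\<in>UNIV. cnj (y$k) * y$k)"
    by (simp add: y_def matrix_vector_mult_def sum_distrib_right)
  finally have "(\<Sum>k\<in>UNIV. cnj (y$k) * y$k) = 0" using a by simp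
  moreover have "Re (\<Sum>k\<in>UNIV. cnj (y$k) * y$k) = (\<Sum>k\<in>UNIV. (cmod (y$k))^2)"
    by (simp add: cmod_power2 flip: power2_eq_square)
  ultimately have "(\<Sum>j\<in>UNIV. (cmod (y$j))^2) = 0" by simp
  then have "\<forall>j\<in>UNIV. (cmod (y$j))^2 = 0"
    by (subst (asm) sum_nonneg_eq_0_iff) auto
  then show ?thesis by (simp add: vec_eq_iff y_def)
qed

definition blk :: "'a^'n^'n \<Rightarrow> 'a^'n^'n \<Rightarrow> 'a^'n^'n \<Rightarrow> 'a^'n^'n \<Rightarrow> 'a^('n+'n)^('n+'n)" where
  "blk A B C D = (\<chi> i j. case i of Inl a \<Rightarrow> (case j of Inl b \<Rightarrow> A$a$b | Inr b \<Rightarrow> B$a$b)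
                                  | Inr a \<Rightarrow> (case j of Inl b \<Rightarrow> C$a$b | Inr b \<Rightarrow> D$a$b))"

lemma blk_mult:
  fixes A B C D A' B' C' D' :: "'a::semiring_1^'n^'n"
  shows "blk A B C D ** blk A' B' C' D' = blk (A**A' + B**C') (A**B' + B**D') (C**A' + D**C') (C**B' + D**D')"
proof -
  have s: "(\<Sum>k\<in>(UNIV::('n+'n) set). f k) = (\<Sum>k\<in>UNIV. f (Inl k)) + (\<Sum>k\<in>UNIV. f (Inr k))" for f :: "'n+'n \<Rightarrow> 'a"
    by (subst UNIV_Plus_UNIV[symmetric], subst sum.Plus) (auto simp: comp_def)
  show ?thesis
    unfolding matrix_matrix_mult_def blk_def
    by (simp add: vec_eq_iff s split: sum.split)
qed

lemma blk_one: "blk (mat 1) 0 0 (mat 1) = (mat 1 :: 'a::semiring_1^('n::finite+'n)^('n+'n))"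
  by (simp add: blk_def mat_def vec_eq_iff split: sum.split)

lemma blk_eq: "blk A B C D = blk A' B' C' D' \<longleftrightarrow> A = A' \<and> B = B' \<and> C = C' \<and> D = D'"
proof
  assume h: "blk A B C D = blk A' B' C' D'"
  have "\<forall>a b. blk A B C D $ Inl a $ Inl b = blk A' B' C' D' $ Inl a $ Inl b \<and>
     blk A B C D $ Inl a $ Inr b = blk A' B' C' D' $ Inl a $ Inr b \<and>
     blk A B C D $ Inr a $ Inl b = blk A' B' C' D' $ Inr a $ Inl b \<and>
     blk A B C D $ Inr a $ Inr b = blk A' B' C' D' $ Inr a $ Inr b" using h by simp
  then show "A = A' \<and> B = B' \<and> C = C' \<and> D = D'" by (simp add: blk_def vec_eq_iff)
qed simp

lemma block_inverse:
  fixes X1 X2 X3 X4 Y1 Y2 Y3 Y4 :: "'a::field^'n^'n"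
  assumes "Y1**X1 + Y2**X3 = mat 1" "Y1**X2 + Y2**X4 = 0" "Y3**X1 + Y4**X3 = 0" "Y3**X2 + Y4**X4 = mat 1"
  shows "X1**Y1 + X2**Y3 = mat 1 \<and> X1**Y2 + X2**Y4 = 0 \<and> X3**Y1 + X4**Y3 = 0 \<and> X3**Y2 + X4**Y4 = mat 1"
proof -
  have "blk Y1 Y2 Y3 Y4 ** blk X1 X2 X3 X4 = mat 1"
    using assms by (simp add: blk_mult blk_one[symmetric])
  then have "blk X1 X2 X3 X4 ** blk Y1 Y2 Y3 Y4 = mat 1"
    using matrix_left_right_inverse by blast
  then show ?thesis by (simp add: blk_mult blk_one[symmetric] blk_eq)
qed


lemma sm_mat: "sm c (mat d) = (mat (c*d) :: complex^'n^'n)"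
  by (simp add: sm_def mat_def vec_eq_iff)
lemma sm_zero_r[simp]: "sm c 0 = 0" by (simp add: sm_def vec_eq_iff)
lemma sm_neg: "sm (-c) X = - sm c X" by (simp add: sm_def vec_eq_iff)
lemma sm_uminus': "sm c (- X) = - sm c X" by (simp add: sm_def vec_eq_iff)

lemmas sms = sm_mat_left sm_mat_right sm_mm_l sm_mm_r sm_sm sm_add sm_diff sm_uminus' sm_neg adj_sm
  mm_rdistrib mm_ldistrib mm_rdiff mm_ldiff mm_runinus mm_luminus adj_mult sm_mat mat_uminus

lemma phi_inj:
  fixes P P' R R' :: "complex^'n^'n" and k :: real
  assumes k: "k \<noteq> 0"
    and W1: "adj P ** P' - adj P' ** P = mat (2*\<i>*k)"
    and W2: "adj R ** R' - adj R' ** R = mat (-2*\<i>*k)"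
    and W3: "adj R ** P' - adj R' ** P = 0"
    and W3': "adj P ** R' - adj P' ** R = 0"
    and e1: "P *v x + R *v y = 0" and e2: "P' *v x + R' *v y = 0"
  shows "x = 0 \<and> y = 0"
proof -
  have "adj P *v (P' *v x + R' *v y) - adj P' *v (P *v x + R *v y)
      = (adj P ** P' - adj P' ** P) *v x + (adj P ** R' - adj P' ** R) *v y"
    by (simp add: matrix_vector_right_distrib matrix_vector_mult_diff_rdistrib matrix_vector_mul_assoc algebra_simps)
  hence "(2*\<i>*k) *s x = 0" using e1 e2 W1 W3' by (simp add: mat_vec)
  hence x: "x = 0" using k by (simp add: vec_eq_iff)
  have "adj R *v (P' *v x + R' *v y) - adj R' *v (P *v x + R *v y)
      = (adj R ** P' - adj R' ** P) *v x + (adj R ** R' - adj R' ** R) *v y"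
    by (simp add: matrix_vector_right_distrib matrix_vector_mult_diff_rdistrib matrix_vector_mul_assoc algebra_simps)
  hence "(-2*\<i>*k) *s y = 0" using e1 e2 W2 W3 by (simp add: mat_vec)
  hence "y = 0" using k by (simp add: vec_eq_iff)
  with x show ?thesis by simp
qed

lemma core:
  fixes P P' R R' U :: "complex^'n^'n" and k :: real
  assumes k: "k \<noteq> 0"
    and W1: "adj P ** P' - adj P' ** P = mat (2*\<i>*k)"
    and W2: "adj R ** R' - adj R' ** R = mat (-2*\<i>*k)"
    and W3: "adj R ** P' - adj R' ** P = 0"
    and U: "adj U ** U = mat 1"
  defines "A \<equiv> mat (1/2) ** (U + mat 1)" and "B \<equiv> mat (\<i>/2) ** (U - mat 1)"
  defines "Mk \<equiv> adj P ** B - adj P' ** A" and "Mm \<equiv> adj R ** B - adj R' ** A"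
  defines "S \<equiv> - (Mk ** matrix_inv Mm)"
  defines "Psi0 \<equiv> R + P ** S" and "Psix0 \<equiv> R' + P' ** S"
  shows "invertible (Psi0 + mat \<i> ** Psix0) \<and>
         U = (Psi0 - mat \<i> ** Psix0) ** matrix_inv (Psi0 + mat \<i> ** Psix0)"
proof -
  have W3': "adj P ** R' - adj P' ** R = 0"
  proof -
    have "adj (adj R ** P' - adj R' ** P) = 0" using W3 by simp
    hence "adj P' ** R = adj P ** R'" by (simp add: adj_mult)
    thus ?thesis by simp
  qed
  define c where "c = inverse (2*\<i>*complex_of_real k)"
  have c1: "c * (2*\<i>*complex_of_real k) = 1" unfolding c_def by (rule left_inverse) (use k in simp)
  have W1': "adj P ** P' = adj P' ** P + mat (2*\<i>*k)" using W1 by (simp add: algebra_simps)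
  have W2': "adj R ** R' = adj R' ** R + mat (-2*\<i>*k)" using W2 by (simp add: algebra_simps)
  have W3'': "adj R ** P' = adj R' ** P" using W3 by simp
  have W4'': "adj P ** R' = adj P' ** R" using W3' by simp
  have blk: "P ** sm (-c) (adj P') + R ** sm c (adj R') = mat 1 \<and>
        P ** sm c (adj P) + R ** sm (-c) (adj R) = 0 \<and>
        P' ** sm (-c) (adj P') + R' ** sm c (adj R') = 0 \<and>
        P' ** sm c (adj P) + R' ** sm (-c) (adj R) = mat 1"
  proof (rule block_inverse)
    show "sm (-c) (adj P') ** P + sm c (adj P) ** P' = mat 1"
      using c1 by (simp add: sms W1' algebra_simps)
    show "sm (-c) (adj P') ** R + sm c (adj P) ** R' = 0"
      by (simp add: sms W4'' algebra_simps)
    show "sm c (adj R') ** P + sm (-c) (adj R) ** P' = 0"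
      by (simp add: sms W3'' algebra_simps)
    show "sm c (adj R') ** R + sm (-c) (adj R) ** R' = mat 1"
      using c1 by (simp add: sms W2' algebra_simps)
  qed
  have D1: "P ** adj P' = R ** adj R' - mat (2*\<i>*k)"
  proof -
    have "sm c (R ** adj R' - P ** adj P') = mat 1" using blk by (simp add: sms algebra_simps)
    hence "sm (2*\<i>*k) (sm c (R ** adj R' - P ** adj P')) = mat (2*\<i>*k)" by (simp add: sm_mat)
    hence "R ** adj R' - P ** adj P' = mat (2*\<i>*k)" using c1 by (simp add: sm_sm mult.commute)
    thus ?thesis by (simp add: algebra_simps)
  qed
  have D2: "P ** adj P = R ** adj R"
  proof -
    have "sm c (P ** adj P - R ** adj R) = 0" using blk by (simp add: sms algebra_simps)
    hence "sm (2*\<i>*k) (sm c (P ** adj P - R ** adj R)) = 0" by simp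
    hence "P ** adj P - R ** adj R = 0" using c1 by (simp add: sm_sm mult.commute)
    thus ?thesis by simp
  qed
  have D3: "P' ** adj P' = R' ** adj R'"
  proof -
    have "sm c (R' ** adj R' - P' ** adj P') = 0" using blk by (simp add: sms algebra_simps)
    hence "sm (2*\<i>*k) (sm c (R' ** adj R' - P' ** adj P')) = 0" by simp
    hence "R' ** adj R' - P' ** adj P' = 0" using c1 by (simp add: sm_sm mult.commute)
    thus ?thesis by simp
  qed
  have D4: "P' ** adj P = R' ** adj R + mat (2*\<i>*k)"
  proof -
    have "sm c (P' ** adj P - R' ** adj R) = mat 1" using blk by (simp add: sms algebra_simps)
    hence "sm (2*\<i>*k) (sm c (P' ** adj P - R' ** adj R)) = mat (2*\<i>*k)" by (simp add: sm_mat)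
    hence "P' ** adj P - R' ** adj R = mat (2*\<i>*k)" using c1 by (simp add: sm_sm mult.commute)
    thus ?thesis by (simp add: algebra_simps)
  qed
  have UU: "U ** adj U = mat 1" using U matrix_left_right_inverse by blast
  have AB: "adj B ** A = adj A ** B"
    unfolding A_def B_def by (simp add: sms U algebra_simps)
  have AiB: "A + mat \<i> ** B = mat 1"
    unfolding A_def B_def
    apply (simp add: sms)
    by (simp add: vec_eq_iff mat_def)
  have PMk: "P ** Mk = R ** Mm + mat (2*\<i>*k) ** A"
    unfolding Mk_def Mm_def
    by (simp add: mm_ldiff matrix_mul_assoc D1 D2 mm_rdiff algebra_simps)
  have P'Mk: "P' ** Mk = R' ** Mm + mat (2*\<i>*k) ** B"
    unfolding Mk_def Mm_def
    by (simp add: mm_ldiff matrix_mul_assoc D3 D4 mm_rdistrib algebra_simps)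
  have adjMk: "adj Mk = adj B ** P - adj A ** P'" by (simp add: Mk_def adj_mult)
  have adjMm: "adj Mm = adj B ** R - adj A ** R'" by (simp add: Mm_def adj_mult)
  have MM: "adj Mk ** Mk = adj Mm ** Mm"
  proof -
    have "adj Mk ** Mk = adj B ** (P ** Mk) - adj A ** (P' ** Mk)"
      by (simp add: adjMk mm_rdiff matrix_mul_assoc)
    also have "\<dots> = adj B ** (R ** Mm + mat (2*\<i>*k) ** A) - adj A ** (R' ** Mm + mat (2*\<i>*k) ** B)"
      by (simp add: PMk P'Mk)
    also have "\<dots> = (adj B ** R - adj A ** R') ** Mm + mat (2*\<i>*k) ** (adj B ** A - adj A ** B)"
      by (simp add: sms matrix_mul_assoc algebra_simps)
    also have "\<dots> = adj Mm ** Mm" by (simp add: AB adjMm)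
    finally show ?thesis .
  qed
  have Mm_inv: "invertible Mm"
  proof (rule invertible_ker)
    fix w assume w: "Mm *v w = 0"
    have "(adj Mk ** Mk) *v w = 0" using w by (simp add: MM matrix_vector_mul_assoc[symmetric])
    hence w2: "Mk *v w = 0" by (rule adj_ker)
    define x where "x = A *v w"
    define y where "y = B *v w"
    have e1: "adj P *v y - adj P' *v x = 0" using w2
      by (simp add: x_def y_def Mk_def matrix_vector_mult_diff_rdistrib matrix_vector_mul_assoc)
    have e2: "adj R *v y - adj R' *v x = 0" using w
      by (simp add: x_def y_def Mm_def matrix_vector_mult_diff_rdistrib matrix_vector_mul_assoc)
    have "P *v (adj P *v y - adj P' *v x) - R *v (adj R *v y - adj R' *v x)
         = (P ** adj P - R ** adj R) *v y - (P ** adj P' - R ** adj R') *v x"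
      by (simp add: matrix_vector_mult_diff_distrib matrix_vector_mult_diff_rdistrib matrix_vector_mul_assoc algebra_simps)
    hence x0: "x = 0" using e1 e2 D1 D2 k by (simp add: mat_vec mat_uminus vec_eq_iff)
    have "P' *v (adj P *v y - adj P' *v x) - R' *v (adj R *v y - adj R' *v x)
         = (P' ** adj P - R' ** adj R) *v y - (P' ** adj P' - R' ** adj R') *v x"
      by (simp add: matrix_vector_mult_diff_distrib matrix_vector_mult_diff_rdistrib matrix_vector_mul_assoc algebra_simps)
    hence y0: "y = 0" using e1 e2 D3 D4 k by (simp add: mat_vec mat_uminus vec_eq_iff)
    have "w = (A + mat \<i> ** B) *v w" by (simp add: AiB)
    also have "\<dots> = x + \<i> *s y"
      by (simp add: x_def y_def matrix_vector_mult_add_rdistrib matrix_vector_mul_assoc[symmetric] mat_vec)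
    finally show "w = 0" using x0 y0 by simp
  qed
  note Mi = matrix_inv_props[OF Mm_inv]
  have BC: "adj A ** Psix0 = adj B ** Psi0"
  proof -
    have "adj A ** Psix0 - adj B ** Psi0 = - adj Mm - adj Mk ** S"
      by (simp add: Psi0_def Psix0_def adjMk adjMm mm_ldistrib mm_rdiff matrix_mul_assoc algebra_simps)
    also have "adj Mk ** S = - adj Mm"
      by (simp add: S_def mm_luminus matrix_mul_assoc MM) (simp add: Mi flip: matrix_mul_assoc)
    finally show ?thesis by simp
  qed
  have key: "adj U ** (Psi0 - mat \<i> ** Psix0) = Psi0 + mat \<i> ** Psix0"
  proof -
    have "sm (1/2) (adj U ** Psix0 + Psix0) = sm (-\<i>/2) (adj U ** Psi0 - Psi0)"
      using BC unfolding A_def B_def by (simp add: sms algebra_simps)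
    hence "sm (2*\<i>) (sm (1/2) (adj U ** Psix0 + Psix0)) = sm (2*\<i>) (sm (-\<i>/2) (adj U ** Psi0 - Psi0))"
      by simp
    hence h: "sm \<i> (adj U ** Psix0 + Psix0) = adj U ** Psi0 - Psi0"
      by (simp add: sm_sm)
    show ?thesis
    proof -
      have "adj U ** (Psi0 - mat \<i> ** Psix0) = adj U ** Psi0 - sm \<i> (adj U ** Psix0)"
        by (simp add: sms)
      also have "\<dots> = Psi0 + sm \<i> Psix0" using h by (simp add: sms algebra_simps)
      finally show ?thesis by (simp add: sms)
    qed
  qed
  define Z where "Z = Psi0 + mat \<i> ** Psix0"
  have Zinv: "invertible Z"
  proof (rule invertible_ker)
    fix v assume v: "Z *v v = 0"
    have "(Psi0 - mat \<i> ** Psix0) *v v = (U ** adj U ** (Psi0 - mat \<i> ** Psix0)) *v v" by (simp add: UU)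
    also have "\<dots> = U *v ((adj U ** (Psi0 - mat \<i> ** Psix0)) *v v)"
      by (simp add: matrix_vector_mul_assoc matrix_mul_assoc)
    also have "\<dots> = 0" using v by (simp add: key Z_def)
    finally have v2: "Psi0 *v v - \<i> *s (Psix0 *v v) = 0"
      by (simp add: matrix_vector_mult_diff_rdistrib matrix_vector_mul_assoc[symmetric] mat_vec)
    have v1: "Psi0 *v v + \<i> *s (Psix0 *v v) = 0" using v
      by (simp add: Z_def matrix_vector_mult_add_rdistrib matrix_vector_mul_assoc[symmetric] mat_vec)
    have a: "Psi0 *v v = 0" using v1 v2 by (simp add: vec_eq_iff)
    have b: "Psix0 *v v = 0" using v1 a by (simp add: vec_eq_iff)
    have "P *v (S *v v) + R *v v = 0" using a
      by (simp add: Psi0_def matrix_vector_mult_add_rdistrib matrix_vector_mul_assoc add.commute)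
    moreover have "P' *v (S *v v) + R' *v v = 0" using b
      by (simp add: Psix0_def matrix_vector_mult_add_rdistrib matrix_vector_mul_assoc add.commute)
    ultimately show "v = 0" using phi_inj[OF k W1 W2 W3 W3'] by blast
  qed
  note Zi = matrix_inv_props[OF Zinv]
  have "Psi0 - mat \<i> ** Psix0 = U ** Z"
    by (metis key UU matrix_mul_assoc matrix_mul_lid Z_def)
  hence "(Psi0 - mat \<i> ** Psix0) ** matrix_inv Z = U"
    by (simp add: Zi flip: matrix_mul_assoc)
  thus ?thesis using Zinv by (simp add: Z_def)
qed


lemma linear_mm_right: "linear (\<lambda>Y. (X::complex^'n^'m) ** (Y::complex^'k^'n))"
  by (rule linearI) (simp_all add: matrix_add_ldistrib matrix_scalar_ac scalar_matrix_assoc)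
lemma linear_mm_left: "linear (\<lambda>X. (X::complex^'n^'m) ** (Y::complex^'k^'n))"
  by (rule linearI) (simp_all add: mm_rdistrib scalar_matrix_assoc)
lemma bilinear_mm: "bilinear (\<lambda>(X::complex^'n^'m) (Y::complex^'k^'n). X ** Y)"
  unfolding bilinear_def using linear_mm_right linear_mm_left by blast
lemma bb_mm: "bounded_bilinear (\<lambda>(X::complex^'n^'m) (Y::complex^'k^'n). X ** Y)"
  using bilinear_mm bilinear_conv_bounded_bilinear by blast
lemma bl_adj: "bounded_linear (adj :: complex^'n^'m \<Rightarrow> complex^'m^'n)"
proof -
  have "linear (adj :: complex^'n^'m \<Rightarrow> complex^'m^'n)"
    by (rule linearI) (simp_all add: adj_def vec_eq_iff)
  thus ?thesis using linear_conv_bounded_linear by blast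
qed
lemma bl_mat: "bounded_linear (mat :: complex \<Rightarrow> complex^'n^'n)"
proof -
  have "linear (mat :: complex \<Rightarrow> complex^'n^'n)"
    by (rule linearI) (simp_all add: mat_def vec_eq_iff)
  thus ?thesis using linear_conv_bounded_linear by blast
qed
lemma adj_scaleR: "adj (r *\<^sub>R X) = r *\<^sub>R adj X"
  by (simp add: adj_def vec_eq_iff)

lemma mm_bound: "\<exists>K>0. \<forall>(X::complex^'n^'m) (Y::complex^'k^'n). norm (X ** Y) \<le> norm X * norm Y * K"
  using bounded_bilinear.pos_bounded[OF bb_mm] by blast
lemma adj_bound: "\<exists>K>0. \<forall>X::complex^'n^'m. norm (adj X) \<le> norm X * K"
  using bounded_linear.pos_bounded[OF bl_adj] by blast
lemma mat_bound: "\<exists>K>0. \<forall>c. norm (mat c :: complex^'n^'n) \<le> norm c * K"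
  using bounded_linear.pos_bounded[OF bl_mat] by blast

lemma telescope:
  fixes f :: "real \<Rightarrow> 'a::real_normed_vector" and \<mu> \<nu> :: "real \<Rightarrow> real"
  assumes ab: "a \<le> b"
    and H: "\<And>\<epsilon>. \<epsilon> > 0 \<Longrightarrow> \<exists>\<delta>>0. \<forall>s t. a \<le> s \<and> s \<le> t \<and> t \<le> b \<and> t - s < \<delta> \<longrightarrow>
              norm (f t - f s) \<le> \<mu> t - \<mu> s + \<epsilon> * (t - s + \<nu> t - \<nu> s)"
  shows "norm (f b - f a) \<le> \<mu> b - \<mu> a"
proof -
  have main: "norm (f b - f a) \<le> \<mu> b - \<mu> a + \<epsilon> * (b - a + \<nu> b - \<nu> a)" if e: "\<epsilon> > 0" for \<epsilon>
  proof -
    obtain \<delta> where d: "\<delta> > 0" and dH: "\<forall>s t. a \<le> s \<and> s \<le> t \<and> t \<le> b \<and> t - s < \<delta> \<longrightarrow>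
              norm (f t - f s) \<le> \<mu> t - \<mu> s + \<epsilon> * (t - s + \<nu> t - \<nu> s)" using H[OF e] by blast
    obtain N :: nat where N: "(b - a) / \<delta> < real N" using reals_Archimedean2 by blast
    have "0 \<le> (b - a) / \<delta>" using ab d by simp
    hence Npos: "N > 0" using N by linarith
    define t where "t j = a + real j * ((b - a) / real N)" for j :: nat
    have step: "t (Suc j) - t j < \<delta>" for j
    proof -
      have "t (Suc j) - t j = (b - a) / real N" by (simp add: t_def algebra_simps add_divide_distrib[symmetric] diff_divide_distrib[symmetric])
      also have "\<dots> < \<delta>" using N d Npos by (simp add: field_simps)
      finally show ?thesis .
    qed
    have tmono: "t j \<le> t (Suc j)" for j using ab Npos by (simp add: t_def divide_right_mono mult_right_mono)
    have tle: "j \<le> N \<Longrightarrow> a \<le> t j \<and> t j \<le> b" for j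
    proof -
      assume j: "j \<le> N"
      have "real j * ((b - a) / real N) \<le> real N * ((b - a) / real N)"
        using j ab by (intro mult_right_mono) (simp_all add: divide_nonneg_nonneg)
      also have "\<dots> = b - a" using Npos by simp
      finally show ?thesis using ab by (simp add: t_def divide_nonneg_nonneg)
    qed
    have ind: "j \<le> N \<Longrightarrow> norm (f (t j) - f a) \<le> \<mu> (t j) - \<mu> a + \<epsilon> * (t j - a + \<nu> (t j) - \<nu> a)" for j
    proof (induction j)
      case 0
      then show ?case by (simp add: t_def)
    next
      case (Suc j)
      have IH: "norm (f (t j) - f a) \<le> \<mu> (t j) - \<mu> a + \<epsilon> * (t j - a + \<nu> (t j) - \<nu> a)"
        using Suc by simp
      have r: "norm (f (t (Suc j)) - f (t j)) \<le> \<mu> (t (Suc j)) - \<mu> (t j) + \<epsilon> * (t (Suc j) - t j + \<nu> (t (Suc j)) - \<nu> (t j))"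
        using dH tle[of j] tle[of "Suc j"] Suc.prems tmono[of j] step[of j] by simp
      have "norm (f (t (Suc j)) - f a) \<le> norm (f (t (Suc j)) - f (t j)) + norm (f (t j) - f a)"
        by (metis diff_add_cancel norm_triangle_ineq add.commute diff_diff_eq2 add_diff_cancel_left')
      also have "\<dots> \<le> \<mu> (t (Suc j)) - \<mu> a + \<epsilon> * (t (Suc j) - a + \<nu> (t (Suc j)) - \<nu> a)"
        using r IH by (simp add: algebra_simps)
      finally show ?case .
    qed
    have "t N = b" using Npos by (simp add: t_def)
    with ind[of N] show ?thesis by simp
  qed
  define K where "K = b - a + \<nu> b - \<nu> a"
  show ?thesis
  proof (cases "K \<le> 0")
    case True
    have "norm (f b - f a) \<le> \<mu> b - \<mu> a + 1 * K" using main[of 1] by (simp add: K_def)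
    also have "\<dots> \<le> \<mu> b - \<mu> a" using True by simp
    finally show ?thesis .
  next
    case False
    show ?thesis
    proof (rule field_le_epsilon)
      fix e :: real assume e: "e > 0"
      have "norm (f b - f a) \<le> \<mu> b - \<mu> a + (e / K) * K" using main[of "e/K"] e False by (simp add: K_def)
      also have "\<dots> = \<mu> b - \<mu> a + e" using False by simp
      finally show "norm (f b - f a) \<le> \<mu> b - \<mu> a + e" .
    qed
  qed
qed


lemma taylor1:
  fixes Y Yx :: "real \<Rightarrow> 'a::banach"
  assumes dY: "\<forall>u\<in>{a0..X}. (Y has_vector_derivative Yx u) (at u within {a0..X})"
    and cYx: "continuous_on {a0..X} Yx" and e: "e > 0"
  shows "\<exists>\<delta>>0. \<forall>s t. a0 \<le> s \<and> s \<le> t \<and> t \<le> X \<and> t - s < \<delta> \<longrightarrow>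
            norm (Y t - Y s - (t - s) *\<^sub>R Yx s) \<le> e * (t - s)"
proof -
  have "uniformly_continuous_on {a0..X} Yx"
    using cYx compact_uniformly_continuous by blast
  then obtain d where d: "d > 0" and dd: "\<forall>x\<in>{a0..X}. \<forall>x'\<in>{a0..X}. dist x' x < d \<longrightarrow> dist (Yx x') (Yx x) < e"
    using e unfolding uniformly_continuous_on_def by blast
  show ?thesis
  proof (intro exI[of _ d] conjI allI impI)
    show "d > 0" by fact
    fix s t assume st: "a0 \<le> s \<and> s \<le> t \<and> t \<le> X \<and> t - s < d"
    have "(Y has_vector_derivative Yx u) (at u within {s..t})" if u: "u \<in> {s..t}" for u
    proof -
      have "u \<in> {a0..X}" using u st by auto
      with dY have "(Y has_vector_derivative Yx u) (at u within {a0..X})" by blast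
      thus ?thesis by (rule has_vector_derivative_within_subset) (use st in auto)
    qed
    hence i1: "(Yx has_integral (Y t - Y s)) {s..t}"
      using st by (intro fundamental_theorem_of_calculus) auto
    have i2: "((\<lambda>u. Yx s) has_integral ((t - s) *\<^sub>R Yx s)) {s..t}"
      using has_integral_const_real[of "Yx s" s t] st by (simp add: content_real)
    have i3: "((\<lambda>u. Yx u - Yx s) has_integral (Y t - Y s - (t - s) *\<^sub>R Yx s)) {s..t}"
      using has_integral_diff[OF i1 i2] by simp
    have bb: "norm (Yx u - Yx s) \<le> e" if u: "u \<in> {s..t} - {}" for u
    proof -
      have "dist u s < d" using u st by (simp add: dist_real_def)
      hence "dist (Yx u) (Yx s) < e" using dd u st by auto
      thus "norm (Yx u - Yx s) \<le> e" by (simp add: dist_norm)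
    qed
    from has_integral_bound_real[OF less_imp_le[OF e] finite.emptyI i3 bb] st
    show "norm (Y t - Y s - (t - s) *\<^sub>R Yx s) \<le> e * (t - s)" by (simp add: content_real)
  qed
qed

lemma cont_bound:
  fixes f :: "real \<Rightarrow> 'a::real_normed_vector"
  assumes "continuous_on {a..b} f"
  shows "\<exists>M>0. \<forall>u\<in>{a..b}. norm (f u) \<le> M"
proof -
  have "bounded (f ` {a..b})" using assms compact_continuous_image compact_imp_bounded by blast
  thus ?thesis by (auto simp: bounded_pos)
qed

lemma WI:
  fixes Y Yx Z Zx gY gZ :: "real \<Rightarrow> complex^'n^'n" and N :: "real \<Rightarrow> real"
  assumes aX: "a0 \<le> X"
    and dY: "\<forall>u\<in>{a0..X}. (Y has_vector_derivative Yx u) (at u within {a0..X})"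
    and dZ: "\<forall>u\<in>{a0..X}. (Z has_vector_derivative Zx u) (at u within {a0..X})"
    and cYx: "continuous_on {a0..X} Yx" and cZx: "continuous_on {a0..X} Zx"
    and iY: "\<forall>s t. a0 \<le> s \<and> s \<le> t \<and> t \<le> X \<longrightarrow> (gY has_integral (Yx t - Yx s)) {s..t}"
    and iZ: "\<forall>s t. a0 \<le> s \<and> s \<le> t \<and> t \<le> X \<longrightarrow> (gZ has_integral (Zx t - Zx s)) {s..t}"
    and Nint: "N integrable_on {a0..X}" and Nnn: "\<forall>u\<in>{a0..X}. 0 \<le> N u"
    and bnd: "\<And>\<epsilon>. \<epsilon> > 0 \<Longrightarrow> \<exists>\<delta>>0. \<forall>s t u. a0 \<le> s \<and> s \<le> u \<and> u \<le> t \<and> t \<le> X \<and> t - s < \<delta> \<longrightarrow>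
               norm (adj (Y t) ** gZ u - adj (gY u) ** Z t) \<le> C * N u + \<epsilon> * (N u + 1)"
  shows "norm ((adj (Y X) ** Zx X - adj (Yx X) ** Z X) - (adj (Y a0) ** Zx a0 - adj (Yx a0) ** Z a0))
           \<le> C * integral {a0..X} N"
proof -
  obtain Kb where Kb: "Kb > 0" "\<And>A B. norm ((A::complex^'n^'n) ** (B::complex^'n^'n)) \<le> norm A * norm B * Kb"
    using mm_bound by blast
  obtain Ka where Ka: "Ka > 0" "\<And>A. norm (adj (A::complex^'n^'n)) \<le> norm A * Ka"
    using adj_bound by blast
  obtain M1 where M1: "M1 > 0" "\<forall>u\<in>{a0..X}. norm (Yx u) \<le> M1" using cont_bound[OF cYx] by blast
  obtain M2 where M2: "M2 > 0" "\<forall>u\<in>{a0..X}. norm (Zx u) \<le> M2" using cont_bound[OF cZx] by blast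
  define M where "M = max M1 M2"
  have M: "M > 0" "\<forall>u\<in>{a0..X}. norm (Yx u) \<le> M \<and> norm (Zx u) \<le> M"
    using M1 M2 by (auto simp: M_def max_def)
  define W where "W x = adj (Y x) ** Zx x - adj (Yx x) ** Z x" for x
  define \<nu> where "\<nu> t = integral {a0..t} N" for t
  have Nsub: "N integrable_on {s..t}" if "a0 \<le> s" "t \<le> X" for s t
    using integrable_subinterval_real[OF Nint] that by auto
  have nudiff: "\<nu> t - \<nu> s = integral {s..t} N" if "a0 \<le> s" "s \<le> t" "t \<le> X" for s t
  proof -
    have "N integrable_on {a0..t}" using Nsub[of a0 t] that by simp
    from Henstock_Kurzweil_Integration.integral_combine[OF that(1,2) this]
    show ?thesis by (simp add: \<nu>_def algebra_simps)
  qed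
  have nu0: "\<nu> a0 = 0" by (simp add: \<nu>_def)
  have "norm (W X - W a0) \<le> C * \<nu> X - C * \<nu> a0"
  proof (rule telescope[OF aX])
    fix \<epsilon> :: real assume e: "\<epsilon> > 0"
    obtain \<delta>1 where d1: "\<delta>1 > 0" and b1: "\<forall>s t u. a0 \<le> s \<and> s \<le> u \<and> u \<le> t \<and> t \<le> X \<and> t - s < \<delta>1 \<longrightarrow>
               norm (adj (Y t) ** gZ u - adj (gY u) ** Z t) \<le> C * N u + (\<epsilon>/2) * (N u + 1)"
      using bnd[of "\<epsilon>/2"] e by auto
    define e' where "e' = \<epsilon> / (4 * Kb * Ka * M)"
    have e': "e' > 0" using e Kb Ka M by (simp add: e'_def)
    obtain \<delta>2 where d2: "\<delta>2 > 0" and b2: "\<forall>s t. a0 \<le> s \<and> s \<le> t \<and> t \<le> X \<and> t - s < \<delta>2 \<longrightarrow>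
            norm (Y t - Y s - (t - s) *\<^sub>R Yx s) \<le> e' * (t - s)"
      using taylor1[OF dY cYx e'] by blast
    obtain \<delta>3 where d3: "\<delta>3 > 0" and b3: "\<forall>s t. a0 \<le> s \<and> s \<le> t \<and> t \<le> X \<and> t - s < \<delta>3 \<longrightarrow>
            norm (Z t - Z s - (t - s) *\<^sub>R Zx s) \<le> e' * (t - s)"
      using taylor1[OF dZ cZx e'] by blast
    show "\<exists>\<delta>>0. \<forall>s t. a0 \<le> s \<and> s \<le> t \<and> t \<le> X \<and> t - s < \<delta> \<longrightarrow>
              norm (W t - W s) \<le> C * \<nu> t - C * \<nu> s + \<epsilon> * (t - s + \<nu> t - \<nu> s)"
    proof (intro exI[of _ "min \<delta>1 (min \<delta>2 \<delta>3)"] conjI allI impI)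
      show "min \<delta>1 (min \<delta>2 \<delta>3) > 0" using d1 d2 d3 by simp
      fix s t assume st: "a0 \<le> s \<and> s \<le> t \<and> t \<le> X \<and> t - s < min \<delta>1 (min \<delta>2 \<delta>3)"
      define e1 where "e1 = Y t - Y s - (t - s) *\<^sub>R Yx s"
      define e2 where "e2 = Z t - Z s - (t - s) *\<^sub>R Zx s"
      have ne1: "norm e1 \<le> e' * (t - s)" using b2 st by (simp add: e1_def)
      have ne2: "norm e2 \<le> e' * (t - s)" using b3 st by (simp add: e2_def)
      define PA where "PA = adj (Y t) ** (Zx t - Zx s) - adj (Yx t - Yx s) ** Z t"
      define PB where "PB = adj e1 ** Zx s - adj (Yx s) ** e2"
      have decomp: "W t - W s = PA + PB"
        unfolding W_def PA_def PB_def e1_def e2_def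
        by (simp add: mm_rdiff mm_ldiff mm_rdistrib mm_ldistrib adj_scaleR matrix_scalar_ac scalar_matrix_assoc[symmetric] algebra_simps)
      have hA: "((\<lambda>u. adj (Y t) ** gZ u - adj (gY u) ** Z t) has_integral PA) {s..t}"
      proof -
        have z: "(gZ has_integral (Zx t - Zx s)) {s..t}" using iZ st by auto
        have y: "(gY has_integral (Yx t - Yx s)) {s..t}" using iY st by auto
        have bl1: "bounded_linear (\<lambda>B. adj (Y t) ** (B::complex^'n^'n))"
          using bounded_bilinear.bounded_linear_right[OF bb_mm] by blast
        have bl2: "bounded_linear (\<lambda>A. adj (A::complex^'n^'n) ** Z t)"
          using bounded_linear_compose[OF bounded_bilinear.bounded_linear_left[OF bb_mm, of "Z t"] bl_adj] by (simp add: o_def)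
        have "((\<lambda>u. adj (Y t) ** gZ u) has_integral (adj (Y t) ** (Zx t - Zx s))) {s..t}"
          using has_integral_linear[OF z bl1] by (simp add: o_def)
        moreover have "((\<lambda>u. adj (gY u) ** Z t) has_integral (adj (Yx t - Yx s) ** Z t)) {s..t}"
          using has_integral_linear[OF y bl2] by (simp add: o_def)
        ultimately show ?thesis unfolding PA_def by (rule has_integral_diff)
      qed
      have hB: "((\<lambda>u. C * N u + (\<epsilon>/2) * (N u + 1)) has_integral
                  (C * integral {s..t} N + (\<epsilon>/2) * (integral {s..t} N + (t - s)))) {s..t}"
      proof -
        have n: "(N has_integral integral {s..t} N) {s..t}" using Nsub st by auto
        have c: "((\<lambda>u. 1::real) has_integral (t - s)) {s..t}"
          using has_integral_const_real[of "1::real" s t] st by (simp add: content_real)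
        have "((\<lambda>u. N u + 1) has_integral (integral {s..t} N + (t - s))) {s..t}"
          using has_integral_add[OF n c] by simp
        from has_integral_add[OF has_integral_mult_right[OF n, of C] has_integral_mult_right[OF this, of "\<epsilon>/2"]]
        show ?thesis by simp
      qed
      have nPA: "norm PA \<le> C * integral {s..t} N + (\<epsilon>/2) * (integral {s..t} N + (t - s))"
      proof -
        have "norm (integral {s..t} (\<lambda>u. adj (Y t) ** gZ u - adj (gY u) ** Z t))
              \<le> integral {s..t} (\<lambda>u. C * N u + (\<epsilon>/2) * (N u + 1))"
        proof (rule integral_norm_bound_integral)
          show "(\<lambda>u. adj (Y t) ** gZ u - adj (gY u) ** Z t) integrable_on {s..t}" using hA by blast
          show "(\<lambda>u. C * N u + \<epsilon> / 2 * (N u + 1)) integrable_on {s..t}" using hB by blast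
          fix u assume "u \<in> {s..t}"
          thus "norm (adj (Y t) ** gZ u - adj (gY u) ** Z t) \<le> C * N u + \<epsilon> / 2 * (N u + 1)"
            using b1 st by auto
        qed
        thus ?thesis using integral_unique[OF hA] integral_unique[OF hB] by simp
      qed
      have nPB: "norm PB \<le> (\<epsilon>/2) * (t - s)"
      proof -
        have sX: "s \<in> {a0..X}" using st by auto
        have "norm PB \<le> norm (adj e1 ** Zx s) + norm (adj (Yx s) ** e2)"
          unfolding PB_def by (rule norm_triangle_ineq4)
        also have "\<dots> \<le> norm (adj e1) * norm (Zx s) * Kb + norm (adj (Yx s)) * norm e2 * Kb"
          using Kb by (intro add_mono) auto
        also have "\<dots> \<le> (norm e1 * Ka) * M * Kb + (M * Ka) * norm e2 * Kb"
        proof (intro add_mono mult_right_mono mult_mono)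
          show "norm (adj e1) \<le> norm e1 * Ka" using Ka by auto
          show "norm (Zx s) \<le> M" using M sX by auto
          show "norm (adj (Yx s)) \<le> M * Ka"
            using Ka(2)[of "Yx s"] M sX Ka(1) by (meson mult_right_mono order_trans less_imp_le)
        qed (use Kb Ka M in auto)
        also have "\<dots> \<le> (e' * (t - s) * Ka) * M * Kb + (M * Ka) * (e' * (t - s)) * Kb"
          using ne1 ne2 Ka Kb M by (intro add_mono mult_right_mono mult_left_mono) auto
        also have "\<dots> = (\<epsilon>/2) * (t - s)" using Ka Kb M by (simp add: e'_def field_simps)
        finally show ?thesis .
      qed
      have nn: "0 \<le> integral {s..t} N" using Nsub[of s t] st Nnn by (intro integral_nonneg) auto
      have "norm (W t - W s) \<le> norm PA + norm PB" by (simp add: decomp norm_triangle_ineq)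
      also have "\<dots> \<le> C * integral {s..t} N + (\<epsilon>/2) * (integral {s..t} N + (t - s)) + (\<epsilon>/2) * (t - s)"
        using nPA nPB by linarith
      also have "\<dots> \<le> C * integral {s..t} N + \<epsilon> * (t - s + integral {s..t} N)"
        using mult_nonneg_nonneg[OF less_imp_le[OF e] nn] by (simp add: field_simps)
      finally show "norm (W t - W s) \<le> C * \<nu> t - C * \<nu> s + \<epsilon> * (t - s + \<nu> t - \<nu> s)"
        using nudiff[of s t] st by (simp add: algebra_simps)
    qed
  qed
  thus ?thesis by (simp add: W_def nu0 \<nu>_def)
qed


lemma mm_bound': "\<exists>K>0. \<forall>(X::complex^'n^'n) (Y::complex^'n^'n). norm (X ** Y) \<le> K * norm X * norm Y"
proof -
  obtain K where K: "K > 0" "\<forall>(X::complex^'n^'n) (Y::complex^'n^'n). norm (X ** Y) \<le> norm X * norm Y * K"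
    using mm_bound by blast
  show ?thesis using K by (intro exI[of _ K]) (auto simp: mult_ac)
qed
lemma adj_bound': "\<exists>K>0. \<forall>X::complex^'n^'n. norm (adj X) \<le> K * norm X"
proof -
  obtain K where K: "K > 0" "\<forall>X::complex^'n^'n. norm (adj X) \<le> norm X * K"
    using adj_bound by blast
  show ?thesis using K by (intro exI[of _ K]) (auto simp: mult_ac)
qed

lemma unif_cont:
  fixes Y :: "real \<Rightarrow> 'a::real_normed_vector"
  assumes "continuous_on {a0..X} Y" "\<eta> > 0"
  shows "\<exists>d>0. \<forall>x\<in>{a0..X}. \<forall>x'\<in>{a0..X}. \<bar>x' - x\<bar> < d \<longrightarrow> norm (Y x' - Y x) < \<eta>"
proof -
  have "uniformly_continuous_on {a0..X} Y" using assms(1) compact_uniformly_continuous by blast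
  then obtain d where d: "d > 0" "\<forall>x\<in>{a0..X}. \<forall>x'\<in>{a0..X}. dist x' x < d \<longrightarrow> dist (Y x') (Y x) < \<eta>"
    using assms(2) unfolding uniformly_continuous_on_def by metis
  show ?thesis using d by (intro exI[of _ d]) (simp add: dist_norm dist_real_def)
qed

lemma small_bound:
  fixes Y Z D :: "real \<Rightarrow> complex^'n^'n" and N :: "real \<Rightarrow> real"
  assumes cY: "continuous_on {a0..X} Y" and cZ: "continuous_on {a0..X} Z"
    and Nnn: "\<forall>u\<in>{a0..X}. 0 \<le> N u"
    and D: "\<forall>u\<in>{a0..X}. norm (D u) \<le> cD * (N u + 1)" and e: "\<epsilon> > 0"
  shows "\<exists>\<delta>>0. \<forall>s t u. a0 \<le> s \<and> s \<le> u \<and> u \<le> t \<and> t \<le> X \<and> t - s < \<delta> \<longrightarrow>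
    norm (adj (Y t) ** (D u ** (Z u - Z t)) + (adj (Y t) - adj (Y u)) ** (D u ** Z t)) \<le> \<epsilon> * (N u + 1)"
proof -
  obtain Kb where Kb: "Kb > 0" "\<And>A B. norm ((A::complex^'n^'n) ** (B::complex^'n^'n)) \<le> Kb * norm A * norm B"
    using mm_bound' by blast
  obtain Ka where Ka: "Ka > 0" "\<And>A. norm (adj (A::complex^'n^'n)) \<le> Ka * norm A"
    using adj_bound' by blast
  obtain MY where MY: "MY > 0" "\<forall>u\<in>{a0..X}. norm (Y u) \<le> MY" using cont_bound[OF cY] by blast
  obtain MZ where MZ: "MZ > 0" "\<forall>u\<in>{a0..X}. norm (Z u) \<le> MZ" using cont_bound[OF cZ] by blast
  define c where "c = max cD 1"
  have c: "c > 0" "\<forall>u\<in>{a0..X}. norm (D u) \<le> c * (N u + 1)"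
  proof -
    show "c > 0" by (simp add: c_def)
    show "\<forall>u\<in>{a0..X}. norm (D u) \<le> c * (N u + 1)"
    proof
      fix u assume u: "u \<in> {a0..X}"
      have "cD * (N u + 1) \<le> c * (N u + 1)" using Nnn u by (intro mult_right_mono) (auto simp: c_def)
      thus "norm (D u) \<le> c * (N u + 1)" using D u by (meson order_trans)
    qed
  qed
  define \<eta> where "\<eta> = \<epsilon> / (Kb * Kb * Ka * c * (MY + MZ))"
  have eta: "\<eta> > 0" using e Kb Ka c MY MZ by (simp add: \<eta>_def)
  obtain d1 where d1: "d1 > 0" "\<forall>x\<in>{a0..X}. \<forall>x'\<in>{a0..X}. \<bar>x' - x\<bar> < d1 \<longrightarrow> norm (Y x' - Y x) < \<eta>"
    using unif_cont[OF cY eta] by blast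
  obtain d2 where d2: "d2 > 0" "\<forall>x\<in>{a0..X}. \<forall>x'\<in>{a0..X}. \<bar>x' - x\<bar> < d2 \<longrightarrow> norm (Z x' - Z x) < \<eta>"
    using unif_cont[OF cZ eta] by blast
  show ?thesis
  proof (intro exI[of _ "min d1 d2"] conjI allI impI)
    show "min d1 d2 > 0" using d1 d2 by simp
    fix s t u assume st: "a0 \<le> s \<and> s \<le> u \<and> u \<le> t \<and> t \<le> X \<and> t - s < min d1 d2"
    have uI: "u \<in> {a0..X}" and tI: "t \<in> {a0..X}" using st by auto
    have Du: "norm (D u) \<le> c * (N u + 1)" using c uI by auto
    have N1: "0 \<le> N u + 1" using Nnn uI by auto
    have zz: "norm (Z u - Z t) \<le> \<eta>" using d2 uI tI st by (auto intro: less_imp_le)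
    have yy: "norm (Y t - Y u) \<le> \<eta>" using d1 uI tI st by (auto intro: less_imp_le)
    have t1: "norm (adj (Y t) ** (D u ** (Z u - Z t))) \<le> Kb * (Ka * MY) * (Kb * (c * (N u + 1)) * \<eta>)"
    proof -
      have "norm (adj (Y t) ** (D u ** (Z u - Z t))) \<le> Kb * norm (adj (Y t)) * norm (D u ** (Z u - Z t))"
        using Kb by blast
      also have "\<dots> \<le> Kb * (Ka * MY) * (Kb * (c * (N u + 1)) * \<eta>)"
      proof (intro mult_mono mult_left_mono)
        show "norm (adj (Y t)) \<le> Ka * MY"
          using Ka(2)[of "Y t"] MY tI Ka(1) by (meson mult_left_mono order_trans less_imp_le)
        show "norm (D u ** (Z u - Z t)) \<le> Kb * (c * (N u + 1)) * \<eta>"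
        proof -
          have "norm (D u ** (Z u - Z t)) \<le> Kb * norm (D u) * norm (Z u - Z t)" using Kb by blast
          also have "\<dots> \<le> Kb * (c * (N u + 1)) * \<eta>"
            using Du zz Kb(1) c(1) N1 by (intro mult_mono mult_left_mono) auto
          finally show ?thesis .
        qed
      qed (use Kb Ka MY c N1 eta in auto)
      finally show ?thesis .
    qed
    have t2: "norm ((adj (Y t) - adj (Y u)) ** (D u ** Z t)) \<le> Kb * (Ka * \<eta>) * (Kb * (c * (N u + 1)) * MZ)"
    proof -
      have "norm ((adj (Y t) - adj (Y u)) ** (D u ** Z t)) \<le> Kb * norm (adj (Y t - Y u)) * norm (D u ** Z t)"
        using Kb by simp
      also have "\<dots> \<le> Kb * (Ka * \<eta>) * (Kb * (c * (N u + 1)) * MZ)"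
      proof (intro mult_mono mult_left_mono)
        show "norm (adj (Y t - Y u)) \<le> Ka * \<eta>"
          using Ka(2)[of "Y t - Y u"] yy Ka(1) by (meson mult_left_mono order_trans less_imp_le)
        show "norm (D u ** Z t) \<le> Kb * (c * (N u + 1)) * MZ"
        proof -
          have "norm (D u ** Z t) \<le> Kb * norm (D u) * norm (Z t)" using Kb by blast
          also have "\<dots> \<le> Kb * (c * (N u + 1)) * MZ"
            using Du MZ tI Kb(1) c(1) N1 by (intro mult_mono mult_left_mono) auto
          finally show ?thesis .
        qed
      qed (use Kb Ka MZ c N1 eta in auto)
      finally show ?thesis .
    qed
    have "norm (adj (Y t) ** (D u ** (Z u - Z t)) + (adj (Y t) - adj (Y u)) ** (D u ** Z t))
        \<le> Kb * (Ka * MY) * (Kb * (c * (N u + 1)) * \<eta>) + Kb * (Ka * \<eta>) * (Kb * (c * (N u + 1)) * MZ)"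
      using t1 t2 norm_triangle_ineq[of "adj (Y t) ** (D u ** (Z u - Z t))" "(adj (Y t) - adj (Y u)) ** (D u ** Z t)"]
      by linarith
    also have "\<dots> = (N u + 1) * (\<eta> * (Kb * Kb * Ka * c * (MY + MZ)))" by (simp add: algebra_simps)
    also have "\<eta> * (Kb * Kb * Ka * c * (MY + MZ)) = \<epsilon>"
      using Kb Ka c MY MZ by (simp add: \<eta>_def)
    also have "(N u + 1) * \<epsilon> = \<epsilon> * (N u + 1)" by simp
    finally show "norm (adj (Y t) ** (D u ** (Z u - Z t)) + (adj (Y t) - adj (Y u)) ** (D u ** Z t)) \<le> \<epsilon> * (N u + 1)" .
  qed
qed


locale setting =
  fixes Q :: "real \<Rightarrow> complex^'n^'n" and F Fx :: "real \<Rightarrow> complex \<Rightarrow> complex^'n^'n"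
  assumes Q_sa: "\<And>t. t \<ge> 0 \<Longrightarrow> adj (Q t) = Q t"
    and Q_int: "(\<lambda>t. (1 + t) *\<^sub>R Q t) absolutely_integrable_on {0..}"
    and F_deriv: "\<And>z x. Im z \<ge> 0 \<Longrightarrow> x \<ge> 0 \<Longrightarrow>
                    ((\<lambda>y. F y z) has_vector_derivative Fx x z) (at x within {0..})"
    and F_eq: "\<And>z x. Im z \<ge> 0 \<Longrightarrow> x \<ge> 0 \<Longrightarrow>
                    ((\<lambda>t. Q t ** F t z - mat (z^2) ** F t z) has_integral (Fx x z - Fx 0 z)) {0..x}"
    and F_asym: "\<And>z. Im z \<ge> 0 \<Longrightarrow>
                    ((\<lambda>x. F x z - mat (exp (\<i> * z * complex_of_real x))) \<longlongrightarrow> 0) at_top"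
begin

definition NQ where "NQ u = norm ((1 + u) *\<^sub>R Q u)"

lemma NQ_int: "NQ integrable_on {0..}"
  using Q_int unfolding absolutely_integrable_on_def NQ_def by (simp add: fun_eq_iff)

lemma NQ_sub: "0 \<le> a \<Longrightarrow> NQ integrable_on {a..b}"
  by (rule integrable_on_subinterval[OF NQ_int]) auto

lemma NQ_nn: "0 \<le> NQ u" by (simp add: NQ_def)

lemma QN: "0 \<le> u \<Longrightarrow> norm (Q u) \<le> NQ u"
proof -
  assume u: "0 \<le> u"
  have "1 * norm (Q u) \<le> (1 + u) * norm (Q u)" using u by (intro mult_right_mono) auto
  thus ?thesis using u by (simp add: NQ_def)
qed

abbreviation "gF b \<equiv> (\<lambda>u. Q u ** F u (complex_of_real b) - mat ((complex_of_real b)^2) ** F u (complex_of_real b))"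

lemma Fd: "0 \<le> a0 \<Longrightarrow> \<forall>u\<in>{a0..X}. ((\<lambda>y. F y (complex_of_real b)) has_vector_derivative Fx u (complex_of_real b)) (at u within {a0..X})"
proof
  fix u assume a0: "0 \<le> a0" and u: "u \<in> {a0..X}"
  have "((\<lambda>y. F y (complex_of_real b)) has_vector_derivative Fx u (complex_of_real b)) (at u within {0..})"
    using F_deriv[of "complex_of_real b" u] a0 u by simp
  thus "((\<lambda>y. F y (complex_of_real b)) has_vector_derivative Fx u (complex_of_real b)) (at u within {a0..X})"
    by (rule has_vector_derivative_within_subset) (use a0 in auto)
qed

lemma Fint: "0 \<le> s \<Longrightarrow> s \<le> t \<Longrightarrow> (gF b has_integral (Fx t (complex_of_real b) - Fx s (complex_of_real b))) {s..t}"
proof -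
  assume s: "0 \<le> s" and st: "s \<le> t"
  have ht: "(gF b has_integral (Fx t (complex_of_real b) - Fx 0 (complex_of_real b))) {0..t}"
    using F_eq[of "complex_of_real b" t] s st by simp
  have hs: "(gF b has_integral (Fx s (complex_of_real b) - Fx 0 (complex_of_real b))) {0..s}"
    using F_eq[of "complex_of_real b" s] s by simp
  have it: "gF b integrable_on {0..t}" using ht by blast
  have iss: "gF b integrable_on {s..t}" by (rule integrable_subinterval_real[OF it]) (use s in auto)
  have "integral {0..s} (gF b) + integral {s..t} (gF b) = integral {0..t} (gF b)"
    by (rule Henstock_Kurzweil_Integration.integral_combine[OF s st it])
  hence eq: "integral {s..t} (gF b) = Fx t (complex_of_real b) - Fx s (complex_of_real b)"
    using integral_unique[OF ht] integral_unique[OF hs] by (simp add: algebra_simps)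
  show ?thesis using integrable_integral[OF iss] unfolding eq .
qed

lemma Fc: "0 \<le> a0 \<Longrightarrow> continuous_on {a0..X} (\<lambda>x. F x (complex_of_real b))"
  using Fd by (intro continuous_on_vector_derivative) blast

lemma Fxc: "0 \<le> a0 \<Longrightarrow> continuous_on {a0..X} (\<lambda>x. Fx x (complex_of_real b))"
proof (cases "a0 \<le> X")
  case False thus ?thesis by simp
next
  case True
  assume a0: "0 \<le> a0"
  have ii: "gF b integrable_on {a0..X}" using Fint[OF a0 True] by blast
  have c: "continuous_on {a0..X} (\<lambda>x. Fx a0 (complex_of_real b) + integral {a0..x} (gF b))"
    by (intro continuous_on_add continuous_on_const indefinite_integral_continuous_1 ii)
  show ?thesis
  proof (rule continuous_on_eq[OF c])
    fix x assume x: "x \<in> {a0..X}"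
    show "Fx a0 (complex_of_real b) + integral {a0..x} (gF b) = Fx x (complex_of_real b)"
      using integral_unique[OF Fint[OF a0, of x b]] x by simp
  qed
qed

lemma mat_cnj_real: "adj (mat ((complex_of_real b)^2) :: complex^'n^'n) = mat ((complex_of_real b)^2)"
  by simp

lemma wronsk_const:
  fixes a b X :: real
  assumes ab: "a^2 = b^2" and X: "0 \<le> X"
  shows "adj (F X a) ** Fx X b - adj (Fx X a) ** F X b = adj (F 0 a) ** Fx 0 b - adj (Fx 0 a) ** F 0 b"
proof -
  define L where "L = (complex_of_real b)^2"
  have La: "(complex_of_real a)^2 = L" unfolding L_def by (metis ab of_real_power)
  define D where "D u = Q u - mat L" for u
  obtain cm where cm: "cm > 0" "\<And>c. norm (mat c :: complex^'n^'n) \<le> norm c * cm" using mat_bound by blast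
  define cD where "cD = 1 + norm L * cm"
  have Dbound: "\<forall>u\<in>{0..X}. norm (D u) \<le> cD * (NQ u + 1)"
  proof
    fix u assume u: "u \<in> {0..X}"
    have "norm (D u) \<le> norm (Q u) + norm (mat L :: complex^'n^'n)" unfolding D_def by (rule norm_triangle_ineq4)
    also have "\<dots> \<le> NQ u + norm L * cm" using QN[of u] cm(2)[of L] u by auto
    also have "\<dots> \<le> cD * (NQ u + 1)" using NQ_nn[of u] cm(1) by (simp add: cD_def algebra_simps)
    finally show "norm (D u) \<le> cD * (NQ u + 1)" .
  qed
  have adjD: "u \<ge> 0 \<Longrightarrow> adj (D u) = D u" for u by (simp add: D_def Q_sa L_def)
  have gFa: "gF a u = D u ** F u a" for u by (simp add: D_def La mm_rdiff)
  have gFb: "gF b u = D u ** F u b" for u by (simp add: D_def L_def mm_rdiff)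
  have "norm ((adj (F X a) ** Fx X b - adj (Fx X a) ** F X b) - (adj (F 0 a) ** Fx 0 b - adj (Fx 0 a) ** F 0 b))
           \<le> 0 * integral {0..X} NQ"
  proof (rule WI[where gY = "gF a" and gZ = "gF b" and N = NQ])
    show "0 \<le> X" by fact
    show "\<forall>u\<in>{0..X}. ((\<lambda>y. F y a) has_vector_derivative Fx u a) (at u within {0..X})" using Fd[of 0] by simp
    show "\<forall>u\<in>{0..X}. ((\<lambda>y. F y b) has_vector_derivative Fx u b) (at u within {0..X})" using Fd[of 0] by simp
    show "continuous_on {0..X} (\<lambda>x. Fx x a)" using Fxc[of 0] by simp
    show "continuous_on {0..X} (\<lambda>x. Fx x b)" using Fxc[of 0] by simp
    show "\<forall>s t. 0 \<le> s \<and> s \<le> t \<and> t \<le> X \<longrightarrow> (gF a has_integral (Fx t a - Fx s a)) {s..t}" using Fint by blast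
    show "\<forall>s t. 0 \<le> s \<and> s \<le> t \<and> t \<le> X \<longrightarrow> (gF b has_integral (Fx t b - Fx s b)) {s..t}" using Fint by blast
    show "NQ integrable_on {0..X}" using NQ_sub by simp
    show "\<forall>u\<in>{0..X}. 0 \<le> NQ u" using NQ_nn by simp
    fix \<epsilon> :: real assume e: "\<epsilon> > 0"
    obtain \<delta> where d: "\<delta> > 0" and dd: "\<forall>s t u. 0 \<le> s \<and> s \<le> u \<and> u \<le> t \<and> t \<le> X \<and> t - s < \<delta> \<longrightarrow>
      norm (adj (F t a) ** (D u ** (F u b - F t b)) + (adj (F t a) - adj (F u a)) ** (D u ** F t b)) \<le> \<epsilon> * (NQ u + 1)"
      using small_bound[OF Fc[of 0 X a] Fc[of 0 X b] _ Dbound e] NQ_nn by auto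
    show "\<exists>\<delta>>0. \<forall>s t u. 0 \<le> s \<and> s \<le> u \<and> u \<le> t \<and> t \<le> X \<and> t - s < \<delta> \<longrightarrow>
               norm (adj (F t a) ** gF b u - adj (gF a u) ** F t b) \<le> 0 * NQ u + \<epsilon> * (NQ u + 1)"
    proof (intro exI[of _ \<delta>] conjI allI impI)
      show "\<delta> > 0" by fact
      fix s t u assume st: "0 \<le> s \<and> s \<le> u \<and> u \<le> t \<and> t \<le> X \<and> t - s < \<delta>"
      have eq: "adj (F t a) ** gF b u - adj (gF a u) ** F t b
          = adj (F t a) ** (D u ** (F u b - F t b)) + (adj (F t a) - adj (F u a)) ** (D u ** F t b)"
        using st by (simp add: gFa gFb adj_mult adjD mm_ldiff mm_rdiff matrix_mul_assoc)
      thus "norm (adj (F t a) ** gF b u - adj (gF a u) ** F t b) \<le> 0 * NQ u + \<epsilon> * (NQ u + 1)"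
      proof -
        have "norm (adj (F t a) ** (D u ** (F u b - F t b)) + (adj (F t a) - adj (F u a)) ** (D u ** F t b)) \<le> \<epsilon> * (NQ u + 1)"
          by (rule dd[rule_format, OF st])
        thus ?thesis using eq by simp
      qed
    qed
  qed
  thus ?thesis by simp
qed

end

definition Ec :: "real \<Rightarrow> real \<Rightarrow> complex^'n^'n" where
  "Ec c u = mat (exp (- (\<i> * complex_of_real c * complex_of_real u)))"
definition Ecx :: "real \<Rightarrow> real \<Rightarrow> complex^'n^'n" where
  "Ecx c u = mat (- (\<i> * complex_of_real c) * exp (- (\<i> * complex_of_real c * complex_of_real u)))"
definition Ecxx :: "real \<Rightarrow> real \<Rightarrow> complex^'n^'n" where
  "Ecxx c u = mat (- ((complex_of_real c)^2) * exp (- (\<i> * complex_of_real c * complex_of_real u)))"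

lemma exp_deriv_aux:
  "((\<lambda>x. exp (- (\<i> * complex_of_real c * complex_of_real x))) has_vector_derivative
      (- (\<i> * complex_of_real c) * exp (- (\<i> * complex_of_real c * complex_of_real u)))) (at u within S)"
proof -
  have "((\<lambda>z. exp (- (\<i> * complex_of_real c * z))) has_field_derivative
      (- (\<i> * complex_of_real c) * exp (- (\<i> * complex_of_real c * complex_of_real u)))) (at (complex_of_real u))"
    by (auto intro!: derivative_eq_intros simp: algebra_simps)
  from has_vector_derivative_real_field[OF this] show ?thesis .
qed

lemma Ec_deriv: "((Ec c) has_vector_derivative Ecx c u) (at u within S)"
  unfolding Ec_def Ecx_def
  by (rule bounded_linear.has_vector_derivative[OF bl_mat exp_deriv_aux])

lemma Ecx_deriv: "((Ecx c) has_vector_derivative Ecxx c u) (at u within S)"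
proof -
  have "((\<lambda>x. - (\<i> * complex_of_real c) * exp (- (\<i> * complex_of_real c * complex_of_real x))) has_vector_derivative
      (- (\<i> * complex_of_real c) * (- (\<i> * complex_of_real c) * exp (- (\<i> * complex_of_real c * complex_of_real u))))) (at u within S)"
    by (rule has_vector_derivative_mult_right[OF exp_deriv_aux])
  also have "(- (\<i> * complex_of_real c) * (- (\<i> * complex_of_real c) * exp (- (\<i> * complex_of_real c * complex_of_real u))))
     = - ((complex_of_real c)^2) * exp (- (\<i> * complex_of_real c * complex_of_real u))"
    by (simp add: power2_eq_square algebra_simps)
  finally show ?thesis unfolding Ecx_def Ecxx_def
    by (rule bounded_linear.has_vector_derivative[OF bl_mat])
qed

lemma Ec_cont: "continuous_on S (Ec c)"
  using Ec_deriv by (intro continuous_on_vector_derivative) blast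
lemma Ecx_cont: "continuous_on S (Ecx c)"
  using Ecx_deriv by (intro continuous_on_vector_derivative) blast

lemma norm_exp_real: "norm (exp (- (\<i> * complex_of_real c * complex_of_real u))) = 1"
proof -
  have "- (\<i> * complex_of_real c * complex_of_real u) = \<i> * complex_of_real (- (c * u))" by simp
  thus ?thesis by (metis norm_exp_i_times)
qed

lemma norm_exp_real': "norm (exp (\<i> * complex_of_real c * complex_of_real u)) = 1"
  using norm_exp_real[of "-c" u] by simp

context setting
begin

lemma F_bnd: "\<exists>M>0. \<forall>x\<ge>0. norm (F x (complex_of_real b)) \<le> M"
proof -
  obtain cm where cm: "cm > 0" "\<And>c. norm (mat c :: complex^'n^'n) \<le> norm c * cm" using mat_bound by blast
  have "((\<lambda>x. F x (complex_of_real b) - mat (exp (\<i> * complex_of_real b * complex_of_real x))) \<longlongrightarrow> 0) at_top"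
    using F_asym[of "complex_of_real b"] by simp
  hence "eventually (\<lambda>x. dist (F x (complex_of_real b) - mat (exp (\<i> * complex_of_real b * complex_of_real x))) 0 < 1) at_top"
    by (rule tendstoD) simp
  then obtain x0 where x0: "\<And>x. x \<ge> x0 \<Longrightarrow> norm (F x (complex_of_real b) - mat (exp (\<i> * complex_of_real b * complex_of_real x))) < 1"
    by (auto simp: eventually_at_top_linorder)
  obtain M1 where M1: "M1 > 0" "\<forall>u\<in>{0..max x0 0}. norm (F u (complex_of_real b)) \<le> M1"
    using cont_bound[OF Fc[of 0 "max x0 0" b]] by auto
  show ?thesis
  proof (intro exI[of _ "max M1 (1 + cm)"] conjI allI impI)
    show "max M1 (1 + cm) > 0" using M1 by simp
    fix x :: real assume x: "x \<ge> 0"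
    show "norm (F x (complex_of_real b)) \<le> max M1 (1 + cm)"
    proof (cases "x \<le> max x0 0")
      case True thus ?thesis using M1 x by force
    next
      case False
      hence "x \<ge> x0" by simp
      hence a: "norm (F x (complex_of_real b) - mat (exp (\<i> * complex_of_real b * complex_of_real x))) < 1" by (rule x0)
      have b: "norm (mat (exp (\<i> * complex_of_real b * complex_of_real x)) :: complex^'n^'n) \<le> cm"
        using cm(2)[of "exp (\<i> * complex_of_real b * complex_of_real x)"] by (simp add: norm_exp_real')
      have "norm (F x (complex_of_real b)) \<le> norm (F x (complex_of_real b) - mat (exp (\<i> * complex_of_real b * complex_of_real x)))
            + norm (mat (exp (\<i> * complex_of_real b * complex_of_real x)) :: complex^'n^'n)"
        by (metis diff_add_cancel norm_triangle_ineq)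
      thus ?thesis using a b by simp
    qed
  qed
qed

definition hh :: "real \<Rightarrow> real \<Rightarrow> real \<Rightarrow> complex^'n^'n" where
  "hh b c x = adj (Ec c x) ** Fx x (complex_of_real b) - adj (Ecx c x) ** F x (complex_of_real b)"

lemma h_inc:
  assumes cb: "c^2 = b^2"
  shows "\<exists>C\<ge>0. \<forall>x y. 0 \<le> x \<longrightarrow> x \<le> y \<longrightarrow> norm (hh b c y - hh b c x) \<le> C * integral {x..y} NQ"
proof -
  obtain Kb where Kb: "Kb > 0" "\<And>A B. norm ((A::complex^'n^'n) ** (B::complex^'n^'n)) \<le> Kb * norm A * norm B"
    using mm_bound' by blast
  obtain Ka where Ka: "Ka > 0" "\<And>A. norm (adj (A::complex^'n^'n)) \<le> Ka * norm A"
    using adj_bound' by blast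
  obtain cm where cm: "cm > 0" "\<And>c. norm (mat c :: complex^'n^'n) \<le> norm c * cm" using mat_bound by blast
  obtain MF where MF: "MF > 0" "\<forall>x\<ge>0. norm (F x (complex_of_real b)) \<le> MF" using F_bnd by blast
  define C where "C = Kb * (Ka * cm) * (Kb * MF)"
  define L where "L = (complex_of_real b)^2"
  have Lc: "(complex_of_real c)^2 = L" unfolding L_def by (metis cb of_real_power)
  have Lcb: "(complex_of_real b)^2 = (complex_of_real c)^2" using Lc by (simp add: L_def)
  have Ecn: "norm (adj (Ec c t :: complex^'n^'n)) \<le> Ka * cm" for t
  proof -
    have "norm (Ec c t :: complex^'n^'n) \<le> cm" using cm(2)[of "exp (- (\<i> * complex_of_real c * complex_of_real t))"]
      by (simp add: Ec_def norm_exp_real)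
    thus ?thesis using Ka(2)[of "Ec c t"] Ka(1) by (meson mult_left_mono order_trans less_imp_le)
  qed
  show ?thesis
  proof (intro exI[of _ C] conjI allI impI)
    show "C \<ge> 0" using Kb Ka cm MF by (simp add: C_def)
    fix x y :: real assume x: "0 \<le> x" and xy: "x \<le> y"
    have "norm ((adj (Ec c y) ** Fx y b - adj (Ecx c y) ** F y b) - (adj (Ec c x) ** Fx x b - adj (Ecx c x) ** F x b))
          \<le> C * integral {x..y} NQ"
    proof (rule WI[where gY = "Ecxx c" and gZ = "gF b" and N = NQ])
      show "x \<le> y" by fact
      show "\<forall>u\<in>{x..y}. (Ec c has_vector_derivative Ecx c u) (at u within {x..y})" using Ec_deriv by blast
      show "\<forall>u\<in>{x..y}. ((\<lambda>y. F y b) has_vector_derivative Fx u b) (at u within {x..y})" using Fd[OF x] by simp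
      show "continuous_on {x..y} (Ecx c)" by (rule Ecx_cont)
      show "continuous_on {x..y} (\<lambda>xa. Fx xa b)" using Fxc[OF x] by simp
      show "\<forall>s t. x \<le> s \<and> s \<le> t \<and> t \<le> y \<longrightarrow> (Ecxx c has_integral (Ecx c t - Ecx c s)) {s..t}"
      proof (intro allI impI)
        fix s t assume "x \<le> s \<and> s \<le> t \<and> t \<le> y"
        thus "(Ecxx c has_integral (Ecx c t - Ecx c s)) {s..t}"
          by (intro fundamental_theorem_of_calculus) (auto intro: Ecx_deriv)
      qed
      show "\<forall>s t. x \<le> s \<and> s \<le> t \<and> t \<le> y \<longrightarrow> (gF b has_integral (Fx t b - Fx s b)) {s..t}"
        using Fint x by (meson order_trans)
      show "NQ integrable_on {x..y}" using NQ_sub[OF x] by simp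
      show "\<forall>u\<in>{x..y}. 0 \<le> NQ u" using NQ_nn by simp
      fix \<epsilon> :: real assume e: "\<epsilon> > 0"
      have Dbound: "\<forall>u\<in>{x..y}. norm (mat L :: complex^'n^'n) \<le> norm (mat L :: complex^'n^'n) * (NQ u + 1)"
        using NQ_nn by (simp add: algebra_simps)
      obtain \<delta> where d: "\<delta> > 0" and dd: "\<forall>s t u. x \<le> s \<and> s \<le> u \<and> u \<le> t \<and> t \<le> y \<and> t - s < \<delta> \<longrightarrow>
        norm (adj (Ec c t :: complex^'n^'n) ** (mat L ** (F u b - F t b)) + (adj (Ec c t :: complex^'n^'n) - adj (Ec c u :: complex^'n^'n)) ** (mat L ** F t b)) \<le> \<epsilon> * (NQ u + 1)"
        using small_bound[OF Ec_cont Fc[OF x, of y b] _ Dbound e] NQ_nn by blast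
      show "\<exists>\<delta>>0. \<forall>s t u. x \<le> s \<and> s \<le> u \<and> u \<le> t \<and> t \<le> y \<and> t - s < \<delta> \<longrightarrow>
               norm (adj (Ec c t :: complex^'n^'n) ** gF b u - adj (Ecxx c u) ** F t b) \<le> C * NQ u + \<epsilon> * (NQ u + 1)"
      proof (intro exI[of _ \<delta>] conjI allI impI)
        show "\<delta> > 0" by fact
        fix s t u assume st: "x \<le> s \<and> s \<le> u \<and> u \<le> t \<and> t \<le> y \<and> t - s < \<delta>"
        have u0: "0 \<le> u" using st x by simp
        have eq: "adj (Ec c t :: complex^'n^'n) ** gF b u - adj (Ecxx c u) ** F t b
          = adj (Ec c t :: complex^'n^'n) ** (Q u ** F u b) - (adj (Ec c t :: complex^'n^'n) ** (mat L ** (F u b - F t b)) + (adj (Ec c t :: complex^'n^'n) - adj (Ec c u :: complex^'n^'n)) ** (mat L ** F t b))"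
          by (simp add: Ec_def Ecxx_def L_def Lcb sms mult_ac exp_cnj algebra_simps)
        have n1: "norm (adj (Ec c t :: complex^'n^'n) ** (Q u ** F u b)) \<le> C * NQ u"
        proof -
          have "norm (adj (Ec c t :: complex^'n^'n) ** (Q u ** F u b)) \<le> Kb * norm (adj (Ec c t :: complex^'n^'n)) * norm (Q u ** F u b)" by (rule Kb(2))
          also have "\<dots> \<le> Kb * (Ka * cm) * (Kb * NQ u * MF)"
          proof (intro mult_mono mult_left_mono)
            show "norm (adj (Ec c t :: complex^'n^'n)) \<le> Ka * cm" by (rule Ecn)
            have "norm (Q u ** F u b) \<le> Kb * norm (Q u) * norm (F u b)" by (rule Kb(2))
            also have "\<dots> \<le> Kb * NQ u * MF"
              using QN[OF u0] MF u0 Kb(1) NQ_nn[of u] by (intro mult_mono mult_left_mono) auto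
            finally show "norm (Q u ** F u b) \<le> Kb * NQ u * MF" .
          qed (use Kb Ka cm in auto)
          also have "\<dots> = C * NQ u" by (simp add: C_def algebra_simps)
          finally show ?thesis .
        qed
        have n2: "norm (adj (Ec c t :: complex^'n^'n) ** (mat L ** (F u b - F t b)) + (adj (Ec c t :: complex^'n^'n) - adj (Ec c u :: complex^'n^'n)) ** (mat L ** F t b)) \<le> \<epsilon> * (NQ u + 1)"
          by (rule dd[rule_format, OF st])
        show "norm (adj (Ec c t :: complex^'n^'n) ** gF b u - adj (Ecxx c u) ** F t b) \<le> C * NQ u + \<epsilon> * (NQ u + 1)"
          unfolding eq using n1 n2 norm_triangle_ineq4 order_trans add_mono by (smt (verit))
      qed
    qed
    thus "norm (hh b c y - hh b c x) \<le> C * integral {x..y} NQ" by (simp add: hh_def)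
  qed
qed

end

lemma tail_small:
  fixes f :: "real \<Rightarrow> real"
  assumes fi: "f integrable_on {0..}" and nn: "\<And>x. 0 \<le> f x" and e: "e > 0"
  shows "\<exists>x0\<ge>0. \<forall>x y. x0 \<le> x \<longrightarrow> x \<le> y \<longrightarrow> integral {x..y} f < e"
proof -
  define \<nu> where "\<nu> x = integral {0..x} f" for x
  have fs: "f integrable_on {a..b}" if "0 \<le> a" for a b
    by (rule integrable_on_subinterval[OF fi]) (use that in auto)
  have bnd: "\<nu> x \<le> integral {0..} f" if "0 \<le> x" for x
    unfolding \<nu>_def by (rule integral_subset_le) (use fs fi nn in auto)
  have comb: "integral {x..y} f = \<nu> y - \<nu> x" if "0 \<le> x" "x \<le> y" for x y
    using Henstock_Kurzweil_Integration.integral_combine[OF that fs[of 0 y]] unfolding \<nu>_def by simp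
  have inn: "0 \<le> integral {x..y} f" if "0 \<le> x" for x y
    by (rule integral_nonneg) (use fs that nn in auto)
  define S where "S = Sup (\<nu> ` {0..})"
  have ne: "\<nu> ` {0..} \<noteq> {}" by auto
  have bdd: "bdd_above (\<nu> ` {0..})" using bnd by (auto intro!: bdd_aboveI)
  have "S - e < S" using e by simp
  then obtain x0 where x0: "x0 \<in> {0..}" "S - e < \<nu> x0"
    unfolding S_def using less_cSup_iff[OF ne bdd] by auto
  show ?thesis
  proof (intro exI[of _ x0] conjI allI impI)
    show "0 \<le> x0" using x0 by simp
    fix x y assume "x0 \<le> x" "x \<le> y"
    hence x00: "0 \<le> x0" "x0 \<le> x" "x \<le> y" using x0 by auto
    have "\<nu> y \<le> S" unfolding S_def by (rule cSup_upper) (use bdd x00 in auto)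
    moreover have "\<nu> x0 \<le> \<nu> x" using comb[of x0 x] inn[of x0 x] x00 by simp
    ultimately show "integral {x..y} f < e" using comb[of x y] x00 x0 by simp
  qed
qed

lemma seq_at_top:
  assumes b: "b > 0" and th: "\<theta> \<ge> 0"
  shows "filterlim (\<lambda>n::nat. (2*pi*real n + \<theta>)/b) at_top sequentially"
  unfolding filterlim_at_top
proof
  fix Z :: real
  obtain N :: nat where N: "Z * b / (2*pi) < real N" using reals_Archimedean2 by blast
  show "eventually (\<lambda>n. Z \<le> (2*pi*real n + \<theta>)/b) sequentially"
    unfolding eventually_sequentially
  proof (intro exI[of _ N] allI impI)
    fix n assume "N \<le> n"
    hence "Z * b / (2*pi) \<le> real n" using N by linarith
    hence "Z * b \<le> 2*pi*real n" using pi_gt_zero by (simp add: field_simps)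
    hence "Z * b \<le> 2*pi*real n + \<theta>" using th by linarith
    thus "Z \<le> (2*pi*real n + \<theta>)/b" using b by (simp add: field_simps)
  qed
qed

lemma osc_pos:
  fixes P R :: "complex^'n^'n" and b :: real
  assumes b: "b > 0"
    and lim: "((\<lambda>x. sm (exp (\<i> * complex_of_real b * complex_of_real x)) P
                   - sm (exp (- (\<i> * complex_of_real b * complex_of_real x))) R) \<longlongrightarrow> 0) at_top"
  shows "P = 0 \<and> R = 0"
proof -
  have key: "sm (exp (\<i> * complex_of_real \<theta>)) P - sm (exp (- (\<i> * complex_of_real \<theta>))) R = 0" if th: "\<theta> \<ge> 0" for \<theta>
  proof -
    define xs where "xs n = (2*pi*real n + \<theta>)/b" for n :: nat
    have arg: "\<i> * complex_of_real b * complex_of_real (xs n) = \<i> * complex_of_real \<theta> + \<i> * (of_int (int n) * (complex_of_real pi * 2))" for n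
      using b by (simp add: xs_def field_simps)
    have ex: "exp (\<i> * complex_of_real b * complex_of_real (xs n)) = exp (\<i> * complex_of_real \<theta>)" for n
      by (simp only: arg exp_plus_2pin)
    have ex': "exp (- (\<i> * complex_of_real b * complex_of_real (xs n))) = exp (- (\<i> * complex_of_real \<theta>))" for n
      by (simp add: exp_minus ex)
    have "((\<lambda>n. sm (exp (\<i> * complex_of_real b * complex_of_real (xs n))) P
                   - sm (exp (- (\<i> * complex_of_real b * complex_of_real (xs n)))) R) \<longlongrightarrow> 0) sequentially"
      using filterlim_compose[OF lim seq_at_top[OF b th]] unfolding xs_def by simp
    hence "(\<lambda>n. sm (exp (\<i> * complex_of_real \<theta>)) P - sm (exp (- (\<i> * complex_of_real \<theta>))) R) \<longlonglongrightarrow> 0"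
      by (simp only: ex ex')
    thus ?thesis by (simp add: LIMSEQ_const_iff)
  qed
  have k0: "P - R = 0" using key[of 0] by simp
  have ei: "exp (\<i> * complex_of_real (pi/2)) = \<i>" by (metis cis_conv_exp cis_pi_half)
  have ei': "exp (- (\<i> * complex_of_real (pi/2))) = - \<i>" by (simp only: exp_minus ei) simp
  have "sm (exp (\<i> * complex_of_real (pi/2))) P - sm (exp (- (\<i> * complex_of_real (pi/2)))) R = 0"
    by (rule key) simp
  hence "sm \<i> P - sm (- \<i>) R = 0" by (simp only: ei ei')
  hence "sm \<i> (P + R) = 0" by (simp add: sm_add sm_neg)
  hence "sm (-\<i>) (sm \<i> (P + R)) = 0" by simp
  hence k1: "P + R = 0" by (simp add: sm_sm)
  from k0 k1 have "P + P = 0" by (simp add: algebra_simps)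
  hence "(2::real) *\<^sub>R P = 0" by (simp add: scaleR_2)
  hence "P = 0" by simp
  with k0 show ?thesis by simp
qed

lemma osc:
  fixes P R :: "complex^'n^'n" and b :: real
  assumes b: "b \<noteq> 0"
    and lim: "((\<lambda>x. sm (exp (\<i> * complex_of_real b * complex_of_real x)) P
                   - sm (exp (- (\<i> * complex_of_real b * complex_of_real x))) R) \<longlongrightarrow> 0) at_top"
  shows "P = 0 \<and> R = 0"
proof (cases "b > 0")
  case True thus ?thesis using osc_pos lim by blast
next
  case False
  hence b': "-b > 0" using b by simp
  have "((\<lambda>x. - (sm (exp (\<i> * complex_of_real b * complex_of_real x)) P
                   - sm (exp (- (\<i> * complex_of_real b * complex_of_real x))) R)) \<longlongrightarrow> - 0) at_top"
    by (rule tendsto_minus[OF lim])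
  hence "((\<lambda>x. sm (exp (\<i> * complex_of_real (-b) * complex_of_real x)) R
                   - sm (exp (- (\<i> * complex_of_real (-b) * complex_of_real x))) P) \<longlongrightarrow> 0) at_top"
    by simp
  from osc_pos[OF b' this] show ?thesis by simp
qed


lemma sm_tendsto0:
  fixes X :: "'a \<Rightarrow> complex^'n^'n"
  assumes B: "\<And>x. norm (c x) \<le> B" and X: "(X \<longlongrightarrow> 0) F"
  shows "((\<lambda>x. sm (c x) (X x)) \<longlongrightarrow> 0) F"
proof -
  obtain Kb where Kb: "Kb > 0" "\<And>A B. norm ((A::complex^'n^'n) ** (B::complex^'n^'n)) \<le> Kb * norm A * norm B"
    using mm_bound' by blast
  obtain cm where cm: "cm > 0" "\<And>c. norm (mat c :: complex^'n^'n) \<le> norm c * cm" using mat_bound by blast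
  show ?thesis
  proof (rule Lim_null_comparison)
    show "eventually (\<lambda>x. norm (sm (c x) (X x)) \<le> Kb * (B * cm) * norm (X x)) F"
    proof (rule always_eventually, rule allI)
      fix x
      have "norm (sm (c x) (X x)) = norm (mat (c x) ** X x)" by (simp add: sm_mat_left)
      also have "\<dots> \<le> Kb * norm (mat (c x) :: complex^'n^'n) * norm (X x)" by (rule Kb(2))
      also have "\<dots> \<le> Kb * (B * cm) * norm (X x)"
      proof (intro mult_right_mono mult_left_mono)
        show "norm (mat (c x) :: complex^'n^'n) \<le> B * cm"
          using cm(2)[of "c x"] B[of x] cm(1) by (meson mult_right_mono order_trans less_imp_le)
      qed (use Kb in auto)
      finally show "norm (sm (c x) (X x)) \<le> Kb * (B * cm) * norm (X x)" .
    qed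
    show "((\<lambda>x. Kb * (B * cm) * norm (X x)) \<longlongrightarrow> 0) F"
      using tendsto_mult_right_zero[OF tendsto_norm_zero[OF X]] by simp
  qed
qed

lemma tendsto_diff0:
  fixes f :: "'a \<Rightarrow> 'b::real_normed_vector"
  shows "(f \<longlongrightarrow> L) F \<Longrightarrow> ((\<lambda>x. L - f x) \<longlongrightarrow> 0) F"
  using tendsto_diff[OF tendsto_const, of f L F L] by simp

context setting
begin

lemma h_conv:
  assumes cb: "c^2 = b^2"
  shows "\<exists>Lc. (hh b c \<longlongrightarrow> Lc) at_top"
proof -
  obtain C where C: "C \<ge> 0" "\<forall>x y. 0 \<le> x \<longrightarrow> x \<le> y \<longrightarrow> norm (hh b c y - hh b c x) \<le> C * integral {x..y} NQ"
    using h_inc[OF cb] by blast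
  have inc: "dist (hh b c x) (hh b c y) \<le> C * integral {min x y..max x y} NQ" if "0 \<le> x" "0 \<le> y" for x y
  proof (cases "x \<le> y")
    case True thus ?thesis using C(2) that by (simp add: dist_norm norm_minus_commute)
  next
    case False thus ?thesis using C(2) that by (simp add: dist_norm)
  qed
  have "cauchy_filter (filtermap (hh b c) at_top)"
    unfolding cauchy_filter_metric_filtermap
  proof (intro allI impI)
    fix e :: real assume e: "e > 0"
    obtain x0 where x0: "x0 \<ge> 0" "\<forall>x y. x0 \<le> x \<longrightarrow> x \<le> y \<longrightarrow> integral {x..y} NQ < e / (C + 1)"
      using tail_small[OF NQ_int NQ_nn, of "e / (C + 1)"] e C by auto
    show "\<exists>P. eventually P at_top \<and> (\<forall>x y. P x \<and> P y \<longrightarrow> dist (hh b c x) (hh b c y) < e)"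
    proof (intro exI[of _ "\<lambda>x. x0 \<le> x"] conjI allI impI)
      show "eventually (\<lambda>x. x0 \<le> x) at_top" by (rule eventually_ge_at_top)
      fix x y assume xy: "x0 \<le> x \<and> x0 \<le> y"
      have i: "integral {min x y..max x y} NQ < e / (C + 1)" using x0 xy by auto
      have "dist (hh b c x) (hh b c y) \<le> C * integral {min x y..max x y} NQ" using inc xy x0 by auto
      also have "\<dots> \<le> C * (e / (C + 1))" using i C by (intro mult_left_mono) auto
      also have "\<dots> < e" using C e by (simp add: field_simps)
      finally show "dist (hh b c x) (hh b c y) < e" .
    qed
  qed
  moreover have "filtermap (hh b c) at_top \<le> principal UNIV" by simp
  moreover have "filtermap (hh b c) at_top \<noteq> bot" by (simp add: filtermap_bot_iff)
  ultimately obtain Lc where "filtermap (hh b c) at_top \<le> nhds Lc"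
    using cauchy_filter_complete_converges[OF _ complete_UNIV] by blast
  thus ?thesis unfolding filterlim_def by blast
qed

lemma hp_eq: "hh b b x = sm (exp (\<i> * complex_of_real b * complex_of_real x)) (Fx x b)
    - sm (\<i> * complex_of_real b * exp (\<i> * complex_of_real b * complex_of_real x)) (F x b)"
  by (simp add: hh_def Ec_def Ecx_def sm_mat_left exp_cnj)

lemma hm_eq: "hh b (-b) x = sm (exp (- (\<i> * complex_of_real b * complex_of_real x))) (Fx x b)
    - sm (- (\<i> * complex_of_real b) * exp (- (\<i> * complex_of_real b * complex_of_real x))) (F x b)"
  by (simp add: hh_def Ec_def Ecx_def sm_mat_left exp_cnj)

lemma Fx_asym:
  assumes b: "b \<noteq> 0"
  shows "((\<lambda>x. Fx x b - mat (\<i> * complex_of_real b * exp (\<i> * complex_of_real b * complex_of_real x))) \<longlongrightarrow> 0) at_top"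
proof -
  obtain Lp where Lp: "(hh b b \<longlongrightarrow> Lp) at_top" using h_conv[of b b] by auto
  obtain Lm where Lm: "(hh b (-b) \<longlongrightarrow> Lm) at_top" using h_conv[of "-b" b] by auto
  define e where "e x = exp (\<i> * complex_of_real b * complex_of_real x)" for x
  define e' where "e' x = exp (- (\<i> * complex_of_real b * complex_of_real x))" for x
  have ne: "norm (e x) \<le> 1" "norm (e' x) \<le> 1" for x
    by (simp_all add: e_def e'_def norm_exp_real norm_exp_real')
  have e'inv: "e' x = inverse (e x)" for x by (simp add: e_def e'_def exp_minus)
  have enz: "e x \<noteq> 0" for x by (simp add: e_def)
  have Fa: "((\<lambda>x. F x b - mat (e x)) \<longlongrightarrow> 0) at_top"
    using F_asym[of "complex_of_real b"] by (simp add: e_def)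
  define E where "E x = sm (e x) (Lm - mat (2 * \<i> * complex_of_real b)) - sm (e' x) Lp" for x
  have Eeq: "E x = sm (e x) (Lm - hh b (-b) x) - sm (e' x) (Lp - hh b b x)
       + sm (2 * \<i> * complex_of_real b) (F x b - mat (e x))" for x
    unfolding E_def hp_eq hm_eq e_def[symmetric] e'_def[symmetric]
    by (simp add: vec_eq_iff mat_def e'inv enz field_simps)
  have "(E \<longlongrightarrow> 0) at_top"
  proof -
    have "((\<lambda>x. sm (e x) (Lm - hh b (-b) x) - sm (e' x) (Lp - hh b b x)
       + sm (2 * \<i> * complex_of_real b) (F x b - mat (e x))) \<longlongrightarrow> 0 - 0 + 0) at_top"
      by (intro tendsto_add tendsto_diff sm_tendsto0[OF ne(1)] sm_tendsto0[OF ne(2)]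
          sm_tendsto0[where B = "norm (2 * \<i> * complex_of_real b)"] tendsto_diff0 Lp Lm Fa) auto
    moreover have "E = (\<lambda>x. sm (e x) (Lm - hh b (-b) x) - sm (e' x) (Lp - hh b b x)
       + sm (2 * \<i> * complex_of_real b) (F x b - mat (e x)))" by (rule ext, rule Eeq)
    ultimately show ?thesis by simp
  qed
  hence "Lm - mat (2 * \<i> * complex_of_real b) = 0 \<and> Lp = 0"
    using osc[OF b] unfolding E_def e_def e'_def by blast
  hence Lp0: "Lp = 0" by simp
  have eq2: "Fx x b - mat (\<i> * complex_of_real b * e x) = sm (e' x) (hh b b x) + sm (\<i> * complex_of_real b) (F x b - mat (e x))" for x
    unfolding hp_eq e_def[symmetric]
    by (simp add: vec_eq_iff mat_def e'inv enz field_simps)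
  have "((\<lambda>x. sm (e' x) (hh b b x) + sm (\<i> * complex_of_real b) (F x b - mat (e x))) \<longlongrightarrow> 0 + 0) at_top"
    by (intro tendsto_add sm_tendsto0[OF ne(2)] sm_tendsto0[where B = "norm (\<i> * complex_of_real b)"] Fa)
       (use Lp Lp0 in auto)
  moreover have "(\<lambda>x. Fx x b - mat (\<i> * complex_of_real b * e x)) = (\<lambda>x. sm (e' x) (hh b b x) + sm (\<i> * complex_of_real b) (F x b - mat (e x)))"
    by (rule ext, rule eq2)
  ultimately show ?thesis by (simp add: e_def)
qed

end

lemma bfun_of:
  fixes f g :: "real \<Rightarrow> complex^'n^'n"
  assumes lim: "((\<lambda>x. f x - g x) \<longlongrightarrow> 0) at_top" and K: "\<And>x. norm (g x) \<le> K"
  shows "Bfun f at_top"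
proof -
  have "eventually (\<lambda>x. dist (f x - g x) 0 < 1) at_top" by (rule tendstoD[OF lim]) simp
  hence ev: "eventually (\<lambda>x. norm (f x) \<le> K + 1) at_top"
  proof (rule eventually_mono)
    fix x assume "dist (f x - g x) 0 < 1"
    hence "norm (f x - g x) < 1" by simp
    moreover have "norm (f x) \<le> norm (f x - g x) + norm (g x)" by (metis diff_add_cancel norm_triangle_ineq)
    ultimately show "norm (f x) \<le> K + 1" using K[of x] by simp
  qed
  have "0 \<le> K" using K[of 0] norm_ge_zero order_trans by blast
  hence "K + 1 > 0" by simp
  thus ?thesis using ev unfolding Bfun_def by blast
qed

lemma bfun_const_bound:
  fixes f :: "real \<Rightarrow> complex^'n^'n"
  assumes K: "\<And>x. norm (f x) \<le> K"
  shows "Bfun f at_top"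
proof -
  have "0 \<le> K" using K[of 0] norm_ge_zero order_trans by blast
  hence "K + 1 > 0" by simp
  moreover have "eventually (\<lambda>x. norm (f x) \<le> K + 1) at_top"
  proof (intro always_eventually allI)
    fix x show "norm (f x) \<le> K + 1" using K[of x] by linarith
  qed
  ultimately show ?thesis unfolding Bfun_def by blast
qed

lemma zfun_adj: "((\<lambda>x. f x) \<longlongrightarrow> 0) F \<Longrightarrow> Zfun (\<lambda>x. adj (f x :: complex^'n^'n)) F"
  using bounded_linear.tendsto_zero[OF bl_adj, of f F] by (simp add: tendsto_Zfun_iff)

lemma zfun_of: "((\<lambda>x. f x) \<longlongrightarrow> 0) F \<Longrightarrow> Zfun (\<lambda>x. f x :: complex^'n^'n) F"
  by (simp add: tendsto_Zfun_iff)

context setting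
begin

lemma W0:
  assumes a: "a \<noteq> 0" and b: "b \<noteq> 0" and ab: "a^2 = b^2"
  shows "adj (F 0 a) ** Fx 0 b - adj (Fx 0 a) ** F 0 b = mat (\<i> * (complex_of_real a + complex_of_real b))"
proof -
  obtain cm where cm: "cm > 0" "\<And>c. norm (mat c :: complex^'n^'n) \<le> norm c * cm" using mat_bound by blast
  define W where "W x = adj (F x a) ** Fx x b - adj (Fx x a) ** F x b" for x
  define ea where "ea x = exp (\<i> * complex_of_real a * complex_of_real x)" for x
  define eb where "eb x = exp (\<i> * complex_of_real b * complex_of_real x)" for x
  define Ea where "Ea x = (mat (ea x) :: complex^'n^'n)" for x
  define Ea' where "Ea' x = (mat (\<i> * complex_of_real a * ea x) :: complex^'n^'n)" for x
  define Eb where "Eb x = (mat (eb x) :: complex^'n^'n)" for x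
  define Eb' where "Eb' x = (mat (\<i> * complex_of_real b * eb x) :: complex^'n^'n)" for x
  have nea: "norm (ea x) = 1" "norm (eb x) = 1" for x by (simp_all add: ea_def eb_def norm_exp_real')
  have A1: "((\<lambda>x. F x a - Ea x) \<longlongrightarrow> 0) at_top" using F_asym[of "complex_of_real a"] by (simp add: Ea_def ea_def)
  have B1: "((\<lambda>x. F x b - Eb x) \<longlongrightarrow> 0) at_top" using F_asym[of "complex_of_real b"] by (simp add: Eb_def eb_def)
  have A2: "((\<lambda>x. Fx x a - Ea' x) \<longlongrightarrow> 0) at_top" using Fx_asym[OF a] by (simp add: Ea'_def ea_def)
  have B2: "((\<lambda>x. Fx x b - Eb' x) \<longlongrightarrow> 0) at_top" using Fx_asym[OF b] by (simp add: Eb'_def eb_def)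
  have nEa: "norm (adj (Ea x)) \<le> cm" for x
    using cm(2)[of "cnj (ea x)"] nea[of x] by (simp add: Ea_def)
  have nEa': "norm (adj (Ea' x)) \<le> norm a * cm" for x
    using cm(2)[of "cnj (\<i> * complex_of_real a * ea x)"] nea[of x] by (simp add: Ea'_def norm_mult)
  have nEb: "norm (Eb x) \<le> cm" for x
    using cm(2)[of "eb x"] nea[of x] by (simp add: Eb_def)
  have nEb': "norm (Eb' x) \<le> norm b * cm" for x
    using cm(2)[of "\<i> * complex_of_real b * eb x"] nea[of x] by (simp add: Eb'_def norm_mult)
  have brk: "adj (Ea x) ** Eb' x - adj (Ea' x) ** Eb x = mat (\<i> * (complex_of_real a + complex_of_real b))" for x
  proof -
    have "adj (Ea x) ** Eb' x - adj (Ea' x) ** Eb x = mat (\<i> * (complex_of_real a + complex_of_real b) * (cnj (ea x) * eb x))"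
      by (simp add: Ea_def Ea'_def Eb_def Eb'_def mat_diff algebra_simps)
    also have "\<dots> = mat (\<i> * (complex_of_real a + complex_of_real b))"
    proof (cases "a = b")
      case True
      have "cnj (ea x) * eb x = 1" using True
        by (simp add: ea_def eb_def exp_cnj exp_add[symmetric])
      thus ?thesis by simp
    next
      case False
      hence "a = - b" using ab by (metis power2_eq_iff)
      thus ?thesis by simp
    qed
    finally show ?thesis .
  qed
  have dec: "W x - mat (\<i> * (complex_of_real a + complex_of_real b))
     = adj (F x a - Ea x) ** Fx x b + adj (Ea x) ** (Fx x b - Eb' x)
       - (adj (Fx x a - Ea' x) ** F x b + adj (Ea' x) ** (F x b - Eb x))" for x
    unfolding brk[of x, symmetric] W_def by (simp add: mm_ldiff mm_rdiff algebra_simps)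
  have bb: "bounded_bilinear (\<lambda>(X::complex^'n^'n) (Y::complex^'n^'n). X ** Y)" by (rule bb_mm)
  have Bfb: "Bfun (\<lambda>x. Fx x b) at_top" by (rule bfun_of[OF B2 nEb'])
  have Bb: "Bfun (\<lambda>x. F x b) at_top" by (rule bfun_of[OF B1 nEb])
  have z1: "Zfun (\<lambda>x. adj (F x a - Ea x) ** Fx x b) at_top"
    by (rule bounded_bilinear.Zfun_prod_Bfun[OF bb zfun_adj[OF A1] Bfb])
  have z2: "Zfun (\<lambda>x. adj (Ea x) ** (Fx x b - Eb' x)) at_top"
    by (rule bounded_bilinear.Bfun_prod_Zfun[OF bb bfun_const_bound[OF nEa] zfun_of[OF B2]])
  have z3: "Zfun (\<lambda>x. adj (Fx x a - Ea' x) ** F x b) at_top"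
    by (rule bounded_bilinear.Zfun_prod_Bfun[OF bb zfun_adj[OF A2] Bb])
  have z4: "Zfun (\<lambda>x. adj (Ea' x) ** (F x b - Eb x)) at_top"
    by (rule bounded_bilinear.Bfun_prod_Zfun[OF bb bfun_const_bound[OF nEa'] zfun_of[OF B1]])
  have zf: "Zfun (\<lambda>x. adj (F x a - Ea x) ** Fx x b + adj (Ea x) ** (Fx x b - Eb' x)
       - (adj (Fx x a - Ea' x) ** F x b + adj (Ea' x) ** (F x b - Eb x))) at_top"
    by (rule Zfun_diff[OF Zfun_add[OF z1 z2] Zfun_add[OF z3 z4]])
  have "(\<lambda>x. W x - mat (\<i> * (complex_of_real a + complex_of_real b))) = (\<lambda>x. adj (F x a - Ea x) ** Fx x b + adj (Ea x) ** (Fx x b - Eb' x)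
       - (adj (Fx x a - Ea' x) ** F x b + adj (Ea' x) ** (F x b - Eb x)))"
    by (rule ext, rule dec)
  with zf have "Zfun (\<lambda>x. W x - mat (\<i> * (complex_of_real a + complex_of_real b))) at_top" by simp
  hence lim: "(W \<longlongrightarrow> mat (\<i> * (complex_of_real a + complex_of_real b))) at_top"
    unfolding tendsto_Zfun_iff .
  have ev: "eventually (\<lambda>x. W x = W 0) at_top"
  proof (rule eventually_mono[OF eventually_ge_at_top[of 0]])
    fix x :: real assume "0 \<le> x"
    thus "W x = W 0" unfolding W_def by (rule wronsk_const[OF ab])
  qed
  have "((\<lambda>x::real. W 0) \<longlongrightarrow> mat (\<i> * (complex_of_real a + complex_of_real b))) at_top"
    using lim ev by (rule Lim_transform_eventually)
  hence "W 0 = mat (\<i> * (complex_of_real a + complex_of_real b))"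
    by (simp add: tendsto_const_iff)
  thus ?thesis by (simp add: W_def)
qed

end

theorem corollary1:
  fixes Q :: "real \<Rightarrow> complex^'n^'n"
    and U :: "complex^'n^'n"
    and F Fx :: "real \<Rightarrow> complex \<Rightarrow> complex^'n^'n"
    and k :: real
  assumes Q_sa: "\<And>t. t \<ge> 0 \<Longrightarrow> adj (Q t) = Q t"
    and Q_int: "(\<lambda>t. (1 + t) *\<^sub>R Q t) absolutely_integrable_on {0..}"
    and U_unitary: "adj U ** U = mat 1"
    and no_virtual: "\<not> zero_virtual_level Q U"
    and F_deriv: "\<And>z x. Im z \<ge> 0 \<Longrightarrow> x \<ge> 0 \<Longrightarrow>
                    ((\<lambda>y. F y z) has_vector_derivative Fx x z) (at x within {0..})"
    and F_eq: "\<And>z x. Im z \<ge> 0 \<Longrightarrow> x \<ge> 0 \<Longrightarrow>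
                    ((\<lambda>t. Q t ** F t z - mat (z^2) ** F t z) has_integral (Fx x z - Fx 0 z)) {0..x}"
    and F_asym: "\<And>z. Im z \<ge> 0 \<Longrightarrow>
                    ((\<lambda>x. F x z - mat (exp (\<i> * z * complex_of_real x))) \<longlongrightarrow> 0) at_top"
    and k_nz: "k \<noteq> 0"
  shows "let A = mat (1/2) ** (U + mat 1);
             B = mat (\<i>/2) ** (U - mat 1);
             S = - ((adj (F 0 (complex_of_real k)) ** B - adj (Fx 0 (complex_of_real k)) ** A) **
                    matrix_inv (adj (F 0 (- complex_of_real k)) ** B - adj (Fx 0 (- complex_of_real k)) ** A));
             Psi0 = F 0 (- complex_of_real k) + F 0 (complex_of_real k) ** S;
             Psix0 = Fx 0 (- complex_of_real k) + Fx 0 (complex_of_real k) ** S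
         in invertible (Psi0 + mat \<i> ** Psix0) \<and>
            U = (Psi0 - mat \<i> ** Psix0) ** matrix_inv (Psi0 + mat \<i> ** Psix0)"
proof -
  interpret setting Q F Fx
    by (rule setting.intro) (fact Q_sa Q_int F_deriv F_eq F_asym)+
  have mk: "- k \<noteq> 0" using k_nz by simp
  have W1: "adj (F 0 (complex_of_real k)) ** Fx 0 (complex_of_real k) - adj (Fx 0 (complex_of_real k)) ** F 0 (complex_of_real k)
      = mat (2 * \<i> * complex_of_real k)"
    using W0[OF k_nz k_nz] by (simp add: algebra_simps)
  have W2: "adj (F 0 (- complex_of_real k)) ** Fx 0 (- complex_of_real k) - adj (Fx 0 (- complex_of_real k)) ** F 0 (- complex_of_real k)
      = mat (- 2 * \<i> * complex_of_real k)"
    using W0[OF mk mk] by (simp add: algebra_simps)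
  have W3: "adj (F 0 (- complex_of_real k)) ** Fx 0 (complex_of_real k) - adj (Fx 0 (- complex_of_real k)) ** F 0 (complex_of_real k) = 0"
    using W0[OF mk k_nz] by simp
  show ?thesis unfolding Let_def by (rule core[OF k_nz W1 W2 W3 U_unitary])
qed


end
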